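(* Let $M$, the Newtonian dynamical system admitting the normal shift, and the covector field $\mathbf b$ be as in the context, and suppose that $\Vert\mathbf b\Vert<\infty$ for some function $f$ as in the context. Let $x^1,\dots,x^n$ be local coordinates on a chart of $M$ containing $p_0$, with $x^i(p_0)=0$, and let $w>0$. Then the solution $V(x^1,\dots,x^n)$ of the Cauchy problem $\frac{\partial V}{\partial x^i}=b_i(x^1,\dots,x^n,V)$ ($i=1,\dots,n$), $V(0,\dots,0)=w$, which exists and is unique near $p_0$, can be continued to any point of the chart where the local coordinates $x^1,\dots,x^n$ are defined.
   Context: $M$ is a Riemannian manifold with metric $g$; a Newtonian dynamical system on $M$ is given in local coordinates by $\ddot x^k+\sum_{i,j}\Gamma^k_{ij}\dot x^i\dot x^j=F^k(x,\dot x)$ with $\Gamma$ the Levi-Civita connection. Write $v=|\dot x|$, $N^i=\dot x^i/v$, $N_k=\sum_i g_{ki}N^i$. The system admits the normal shift of hypersurfaces if for every hypersurface $S$, every $p_0\in S$ and $\nu_0>0$ there are a neighborhood $S'$ of $p_0$ in $S$ and a smooth positive $\nu$ on $S'$ with $\nu(p_0)=\nu_0$ such that shifting points $p\in S'$ along trajectories with initial velocity $\nu(p)\mathbf n(p)$ ($\mathbf n$ unit normal) produces hypersurfaces orthogonal to the trajectories. For such systems $F_k=a\,N_k+v\sum_i b_i(2N^iN_k-\delta^i_k)$ with smooth $a(p,v)$, $b_i(p,v)$ on $M\times\mathbb R^+$ ($\mathbf b(p,v)\in T^*_pM$) satisfying $\left(\partial_j+b_j\partial_v\right)b_i=\left(\partial_i+b_i\partial_v\right)b_j$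 and $\left(\partial_i+b_i\partial_v\right)a=(\partial_v b_i)a$ in local coordinates $x^1,\dots,x^n,v$; the first of these is the compatibility condition of the Pfaff system $\partial V/\partial x^i=b_i(x,V)$. $f:\mathbb R^+\to\mathbb R^+$ is positive with $\int_{v_0}^v dv/f\to+\infty$ as $v\to+\infty$ and $\to-\infty$ as $v\to0$; the $f$-norm is $\Vert\mathbf b\Vert=\sup_{p,v}|\mathbf b|/f(v)$, $|\mathbf b|^2=\sum g^{ij}b_ib_j$. *)

theory Defs
  imports "HOL-Analysis.Analysis"
begin

definition dir_deriv :: "('a::real_normed_vector \<Rightarrow> real) \<Rightarrow> 'a \<Rightarrow> 'a \<Rightarrow> real" where
  "dir_deriv h u x = deriv (\<lambda>t. h (x + t *\<^sub>R u)) 0"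

fun iter_pd :: "'a::real_normed_vector list \<Rightarrow> ('a \<Rightarrow> real) \<Rightarrow> 'a \<Rightarrow> real" where
  "iter_pd [] h = h"
| "iter_pd (u # us) h = dir_deriv (iter_pd us h) u"

definition smooth_on :: "'a::euclidean_space set \<Rightarrow> ('a \<Rightarrow> real) \<Rightarrow> bool" where
  "smooth_on S h \<longleftrightarrow>
     (\<forall>us. set us \<subseteq> Basis \<longrightarrow>
        continuous_on S (iter_pd us h) \<and>
        (\<forall>u\<in>Basis. \<forall>z\<in>S.
           ((\<lambda>t. iter_pd us h (z + t *\<^sub>R u)) has_real_derivative iter_pd (u # us) h z) (at 0)))"

definition pd_x :: "('n::finite) \<Rightarrow> ((real^'n) \<times> real \<Rightarrow> real) \<Rightarrow> real^'n \<Rightarrow> real \<Rightarrow> real" where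
  "pd_x j h x v = dir_deriv h (axis j 1, 0) (x, v)"

definition pd_v :: "((real^('n::finite)) \<times> real \<Rightarrow> real) \<Rightarrow> real^'n \<Rightarrow> real \<Rightarrow> real" where
  "pd_v h x v = dir_deriv h (0, 1) (x, v)"

definition bcomp :: "(real^'n::finite \<Rightarrow> real \<Rightarrow> real^'n) \<Rightarrow> 'n \<Rightarrow> (real^'n) \<times> real \<Rightarrow> real" where
  "bcomp b i = (\<lambda>(x, v). b x v $ i)"

definition gnorm :: "real^'n^'n \<Rightarrow> real^'n \<Rightarrow> real" where
  "gnorm G c = sqrt (c \<bullet> (matrix_inv G *v c))"

definition Fint :: "(real \<Rightarrow> real) \<Rightarrow> real \<Rightarrow> real \<Rightarrow> real" where
  "Fint f v0 v = (if v0 \<le> v then integral {v0..v} (\<lambda>s. 1 / f s)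
                  else - integral {v..v0} (\<lambda>s. 1 / f s))"

definition solves_pfaff :: "(real^'n::finite \<Rightarrow> real \<Rightarrow> real^'n) \<Rightarrow> (real^'n) set \<Rightarrow> (real^'n \<Rightarrow> real) \<Rightarrow> bool" where
  "solves_pfaff b N V \<longleftrightarrow> continuous_on N V \<and> (\<forall>x\<in>N. V x > 0 \<and>
     (\<forall>i. ((\<lambda>t. V (x + t *\<^sub>R axis i 1)) has_real_derivative (b x (V x) $ i)) (at 0)))"

definition continues_along :: "(real^'n::finite \<Rightarrow> real \<Rightarrow> real^'n) \<Rightarrow> (real^'n) set \<Rightarrow> real \<Rightarrow> (real \<Rightarrow> real^'n) \<Rightarrow> bool" where
  "continues_along b U w \<gamma> \<longleftrightarrow>
     (\<exists>W :: real \<Rightarrow> real. W 0 = w \<and>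
        (\<forall>t\<in>{0..1}. \<exists>N V. open N \<and> \<gamma> t \<in> N \<and> N \<subseteq> U \<and> solves_pfaff b N V \<and>
            (\<exists>e>0. \<forall>s\<in>{0..1}. \<bar>s - t\<bar> < e \<longrightarrow> \<gamma> s \<in> N \<and> V (\<gamma> s) = W s)))"

end

theory Submission
  imports Defs
begin

lemma sym_form:
  fixes G :: "real^'n^'n"
  assumes "transpose G = G"
  shows "x \<bullet> (G *v y) = y \<bullet> (G *v x)"
proof -
  have "x \<bullet> (G *v y) = (\<Sum>i\<in>UNIV. \<Sum>j\<in>UNIV. x$i * G$i$j * y$j)"
    by (simp add: inner_vec_def matrix_vector_mult_def sum_distrib_left mult.assoc)
  also have "\<dots> = (\<Sum>j\<in>UNIV. \<Sum>i\<in>UNIV. x$i * G$i$j * y$j)" by (rule sum.swap)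
  also have "\<dots> = (\<Sum>j\<in>UNIV. \<Sum>i\<in>UNIV. y$j * G$j$i * x$i)"
  proof -
    have "G$i$j = G$j$i" for i j using assms by (metis transpose_def vec_lambda_beta)
    then show ?thesis by (simp add: mult.commute mult.left_commute)
  qed
  also have "\<dots> = y \<bullet> (G *v x)"
    by (simp add: inner_vec_def matrix_vector_mult_def sum_distrib_left mult.assoc)
  finally show ?thesis .
qed

lemma gnorm_bound:
  fixes G :: "real^'n^'n"
  assumes sym: "transpose G = G"
    and pd: "\<And>c. c \<noteq> 0 \<Longrightarrow> c \<bullet> (G *v c) > 0"
    and M: "\<And>c. c \<bullet> (G *v c) \<le> M * (c \<bullet> c)"
  shows "c \<bullet> c \<le> M * (gnorm G c)^2"
proof -
  have inj: "inj ((*v) G)"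
  proof (rule injI)
    fix x y assume "G *v x = G *v y"
    then have "G *v (x - y) = 0" by (simp add: matrix_vector_mult_diff_distrib)
    then show "x = y" using pd[of "x - y"] by fastforce
  qed
  then have "invertible G"
    using matrix_left_invertible_injective invertible_left_inverse by blast
  then have "G ** matrix_inv G = mat 1"
    unfolding invertible_def matrix_inv_def by (metis (mono_tags, lifting) someI_ex)
  define d where "d = matrix_inv G *v c"
  have Gd: "G *v d = c" unfolding d_def
    by (simp add: \<open>G ** matrix_inv G = mat 1\<close> matrix_vector_mul_assoc)
  have cd: "c \<bullet> d = d \<bullet> (G *v d)" using Gd by (simp add: inner_commute)
  have cd0: "c \<bullet> d \<ge> 0" using pd[of d] cd by (cases "d = 0") auto
  have gn: "(gnorm G c)^2 = c \<bullet> d" unfolding gnorm_def d_def[symmetric] using cd0 by simp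
  show ?thesis
  proof (cases "c = 0")
    case True then show ?thesis by (simp add: gnorm_def)
  next
    case False
    then have "d \<noteq> 0" using Gd by auto
    then have cdp: "c \<bullet> d > 0" using pd[of d] cd by simp
    define l where "l = (c \<bullet> c) / (c \<bullet> d)"
    have "0 \<le> (c - l *\<^sub>R d) \<bullet> (G *v (c - l *\<^sub>R d))"
      using pd[of "c - l *\<^sub>R d"] by (cases "c - l *\<^sub>R d = 0") auto
    also have "\<dots> = c \<bullet> (G *v c) - 2 * l * (c \<bullet> c) + l^2 * (c \<bullet> d)"
      using sym_form[OF sym, of d c] Gd cd
      by (simp add: matrix_vector_mult_diff_distrib matrix_vector_mult_scaleR inner_diff_left
          inner_diff_right algebra_simps power2_eq_square inner_commute)
    also have "\<dots> = c \<bullet> (G *v c) - (c \<bullet> c)^2 / (c \<bullet> d)"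
      using cdp unfolding l_def by (simp add: field_simps power2_eq_square)
    finally have "(c \<bullet> c)^2 \<le> c \<bullet> (G *v c) * (c \<bullet> d)"
      using cdp by (simp add: field_simps)
    also have "\<dots> \<le> M * (c \<bullet> c) * (c \<bullet> d)"
      using M cd0 by (simp add: mult_right_mono)
    finally have "(c \<bullet> c) * (c \<bullet> c) \<le> (c \<bullet> c) * (M * (c \<bullet> d))"
      by (simp add: power2_eq_square algebra_simps)
    then have "c \<bullet> c \<le> M * (c \<bullet> d)"
      using False by (simp add: mult_le_cancel_left)
    then show ?thesis using gn by simp
  qed
qed

lemma gnorm_nonneg:
  fixes G :: "real^'n^'n"
  assumes pd: "\<And>c. c \<noteq> 0 \<Longrightarrow> c \<bullet> (G *v c) > 0"
  shows "gnorm G c \<ge> 0"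
proof -
  have inj: "inj ((*v) G)"
  proof (rule injI)
    fix x y assume "G *v x = G *v y"
    then have "G *v (x - y) = 0" by (simp add: matrix_vector_mult_diff_distrib)
    then show "x = y" using pd[of "x - y"] by fastforce
  qed
  then have "invertible G"
    using matrix_left_invertible_injective invertible_left_inverse by blast
  then have "G ** matrix_inv G = mat 1"
    unfolding invertible_def matrix_inv_def by (metis (mono_tags, lifting) someI_ex)
  define d where "d = matrix_inv G *v c"
  have Gd: "G *v d = c" unfolding d_def
    by (simp add: \<open>G ** matrix_inv G = mat 1\<close> matrix_vector_mul_assoc)
  have cd: "c \<bullet> d = d \<bullet> (G *v d)" using Gd by (simp add: inner_commute)
  have cd0: "c \<bullet> d \<ge> 0" using pd[of d] cd by (cases "d = 0") auto
  then show ?thesis unfolding gnorm_def d_def[symmetric] by simp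
qed

lemma sum_basis_norm_le:
  fixes h :: "'a::euclidean_space"
  shows "(\<Sum>u\<in>Basis. \<bar>h \<bullet> u\<bar>) \<le> real DIM('a) * norm h"
proof -
  have "(\<Sum>u\<in>Basis. \<bar>h \<bullet> u\<bar>) \<le> (\<Sum>u\<in>(Basis::'a set). norm h)"
    by (rule sum_mono) (simp add: Basis_le_norm)
  then show ?thesis by simp
qed

lemma partial_point_norm:
  fixes h :: "'a::euclidean_space"
  assumes "T \<subseteq> Basis" "w \<in> Basis" "w \<notin> T" "\<bar>t\<bar> \<le> \<bar>h \<bullet> w\<bar>"
  shows "norm ((\<Sum>u\<in>T. (h \<bullet> u) *\<^sub>R u) + t *\<^sub>R w) \<le> real DIM('a) * norm h"
proof -
  have fT: "finite T" using assms(1) finite_Basis finite_subset by blast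
  have "norm ((\<Sum>u\<in>T. (h \<bullet> u) *\<^sub>R u) + t *\<^sub>R w) \<le> (\<Sum>u\<in>T. \<bar>h \<bullet> u\<bar>) + \<bar>t\<bar>"
  proof -
    have "norm (\<Sum>u\<in>T. (h \<bullet> u) *\<^sub>R u) \<le> (\<Sum>u\<in>T. norm ((h \<bullet> u) *\<^sub>R u))" by (rule norm_sum)
    also have "\<dots> = (\<Sum>u\<in>T. \<bar>h \<bullet> u\<bar>)" using assms(1) by (intro sum.cong) auto
    moreover have "norm (t *\<^sub>R w) = \<bar>t\<bar>" using assms(2) by simp
    moreover have "norm ((\<Sum>u\<in>T. (h \<bullet> u) *\<^sub>R u) + t *\<^sub>R w) \<le> norm (\<Sum>u\<in>T. (h \<bullet> u) *\<^sub>R u) + norm (t *\<^sub>R w)"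
      by (rule norm_triangle_ineq)
    ultimately show ?thesis by linarith
  qed
  also have "\<dots> \<le> (\<Sum>u\<in>insert w T. \<bar>h \<bullet> u\<bar>)" using fT assms(3,4) by simp
  also have "\<dots> \<le> (\<Sum>u\<in>Basis. \<bar>h \<bullet> u\<bar>)"
    using assms by (intro sum_mono2) auto
  also have "\<dots> \<le> real DIM('a) * norm h" by (rule sum_basis_norm_le)
  finally show ?thesis .
qed

lemma unif_taylor:
  fixes F :: "'a::euclidean_space \<Rightarrow> real" and D :: "'a \<Rightarrow> 'a \<Rightarrow> real"
  assumes S: "open S" and Q: "compact Q" "Q \<subseteq> S"
   and der: "\<And>u z. u \<in> Basis \<Longrightarrow> z \<in> S \<Longrightarrow> ((\<lambda>t. F (z + t *\<^sub>R u)) has_real_derivative D u z) (at 0)"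
   and cont: "\<And>u. u \<in> Basis \<Longrightarrow> continuous_on S (D u)"
   and eps: "\<epsilon> > 0"
  shows "\<exists>\<delta>>0. \<forall>z\<in>Q. \<forall>h::'a. norm h < \<delta> \<longrightarrow>
     \<bar>F (z + h) - F z - (\<Sum>u\<in>Basis. (h \<bullet> u) * D u z)\<bar> \<le> \<epsilon> * norm h"
proof -
  obtain e where e: "e > 0" "\<And>x. x \<in> Q \<Longrightarrow> ball x e \<subseteq> S"
    using Heine_Borel_lemma[OF Q(1), of "{S}"] Q(2) S by auto
  define Q' where "Q' = {x + y | x y. x \<in> Q \<and> y \<in> cball 0 (e/2)}"
  have cQ': "compact Q'" unfolding Q'_def by (intro compact_sums Q(1) compact_cball)
  have Q'S: "Q' \<subseteq> S"
  proof
    fix p assume "p \<in> Q'"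
    then obtain x y where "p = x + y" "x \<in> Q" "norm y \<le> e/2" unfolding Q'_def by auto
    then show "p \<in> S" using e(1) e(2)[of x] by (auto simp: dist_norm)
  qed
  have inQ': "z + y \<in> Q'" if "z \<in> Q" "norm y \<le> e/2" for z y
    unfolding Q'_def using that by force
  have QQ': "Q \<subseteq> Q'" using inQ'[of _ 0] e(1) by force
  define n where "n = real DIM('a)"
  have n1: "n \<ge> 1" unfolding n_def by (simp add: DIM_positive Suc_leI)
  define \<epsilon>' where "\<epsilon>' = \<epsilon> / n"
  have \<epsilon>': "\<epsilon>' > 0" using eps n1 by (simp add: \<epsilon>'_def)
  have "\<forall>u\<in>Basis. \<exists>d>0. \<forall>x\<in>Q'. \<forall>x'\<in>Q'. dist x' x < d \<longrightarrow> dist (D u x') (D u x) < \<epsilon>'"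
  proof
    fix u :: 'a assume u: "u \<in> Basis"
    have "uniformly_continuous_on Q' (D u)"
      using compact_uniformly_continuous[OF continuous_on_subset[OF cont[OF u] Q'S] cQ'] .
    then show "\<exists>d>0. \<forall>x\<in>Q'. \<forall>x'\<in>Q'. dist x' x < d \<longrightarrow> dist (D u x') (D u x) < \<epsilon>'"
      unfolding uniformly_continuous_on_def using \<epsilon>' by blast
  qed
  then obtain dd where dd: "\<And>u. u \<in> Basis \<Longrightarrow> dd u > 0"
    "\<And>u x x'. u \<in> Basis \<Longrightarrow> x \<in> Q' \<Longrightarrow> x' \<in> Q' \<Longrightarrow> dist x' x < dd u \<Longrightarrow> dist (D u x') (D u x) < \<epsilon>'"
    by metis
  define d0 where "d0 = Min (dd ` Basis)"
  have d0: "d0 > 0" unfolding d0_def using dd(1) by (simp add: Min_gr_iff)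
  have d0le: "d0 \<le> dd u" if "u \<in> Basis" for u unfolding d0_def using that by simp
  define \<delta> where "\<delta> = min (e/2) d0 / n"
  have \<delta>: "\<delta> > 0" unfolding \<delta>_def using d0 e(1) n1 by simp
  show ?thesis
  proof (intro exI[of _ \<delta>] conjI \<delta> ballI allI impI)
    fix z and h :: 'a assume z: "z \<in> Q" and h: "norm h < \<delta>"
    have nh: "n * norm h < min (e/2) d0" using h n1 unfolding \<delta>_def by (simp add: field_simps)
    have step: "\<bar>F (z + (\<Sum>u\<in>T. (h \<bullet> u) *\<^sub>R u)) - F z - (\<Sum>u\<in>T. (h \<bullet> u) * D u z)\<bar>
          \<le> real (card T) * \<epsilon>' * norm h" if "T \<subseteq> Basis" for T
      using that
    proof (induction T rule: infinite_finite_induct)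
      case (infinite T) then show ?case using finite_Basis finite_subset by blast
    next
      case empty then show ?case by simp
    next
      case (insert w T)
      define p where "p = z + (\<Sum>u\<in>T. (h \<bullet> u) *\<^sub>R u)"
      define a where "a = h \<bullet> w"
      have w: "w \<in> Basis" and TB: "T \<subseteq> Basis" using insert by auto
      have inS: "p + t *\<^sub>R w \<in> Q'" if "\<bar>t\<bar> \<le> \<bar>a\<bar>" for t
      proof -
        have "norm ((\<Sum>u\<in>T. (h \<bullet> u) *\<^sub>R u) + t *\<^sub>R w) \<le> n * norm h"
          using partial_point_norm[OF TB w insert(2)] that unfolding a_def n_def by blast
        then have "p + t *\<^sub>R w = z + ((\<Sum>u\<in>T. (h \<bullet> u) *\<^sub>R u) + t *\<^sub>R w)"
          "norm ((\<Sum>u\<in>T. (h \<bullet> u) *\<^sub>R u) + t *\<^sub>R w) \<le> e/2"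
          using nh unfolding p_def by auto
        then show ?thesis using inQ'[OF z] by (metis add.assoc)
      qed
      have close: "dist (p + t *\<^sub>R w) z < dd w" if "\<bar>t\<bar> \<le> \<bar>a\<bar>" for t
      proof -
        have "norm ((\<Sum>u\<in>T. (h \<bullet> u) *\<^sub>R u) + t *\<^sub>R w) \<le> n * norm h"
          using partial_point_norm[OF TB w insert(2)] that unfolding a_def n_def by blast
        also have "\<dots> < d0" using nh by simp
        also have "\<dots> \<le> dd w" using d0le[OF w] by simp
        finally show ?thesis unfolding p_def dist_norm by (simp add: algebra_simps)
      qed
      have mvt: "\<exists>\<xi>. \<bar>\<xi>\<bar> \<le> \<bar>a\<bar> \<and> F (p + a *\<^sub>R w) - F p = a * D w (p + \<xi> *\<^sub>R w)"
      proof -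
        have dv: "((\<lambda>t. F (p + t *\<^sub>R w)) has_real_derivative D w (p + t *\<^sub>R w)) (at t)"
          if "\<bar>t\<bar> \<le> \<bar>a\<bar>" for t
        proof -
          have "((\<lambda>s. F ((p + t *\<^sub>R w) + s *\<^sub>R w)) has_real_derivative D w (p + t *\<^sub>R w)) (at 0)"
            using der[OF w] inS[OF that] Q'S by blast
          then have "((\<lambda>s. F (p + (s + t) *\<^sub>R w)) has_real_derivative D w (p + t *\<^sub>R w)) (at 0)"
            by (simp add: algebra_simps scaleR_add_left)
          then show ?thesis using DERIV_shift[of "\<lambda>s. F (p + s *\<^sub>R w)" _ 0 t] by simp
        qed
        consider "a = 0" | "a > 0" | "a < 0" by linarith
        then show ?thesis
        proof cases
          case 1 then show ?thesis by auto
        next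
          case 2
          have "\<And>x. 0 \<le> x \<Longrightarrow> x \<le> a \<Longrightarrow> ((\<lambda>t. F (p + t *\<^sub>R w)) has_real_derivative D w (p + x *\<^sub>R w)) (at x)"
            using dv 2 by simp
          from MVT2[OF 2 this] obtain \<xi> where "0 < \<xi>" "\<xi> < a" "F (p + a *\<^sub>R w) - F (p + 0 *\<^sub>R w) = (a - 0) * D w (p + \<xi> *\<^sub>R w)"
            by blast
          then show ?thesis by (intro exI[of _ \<xi>]) auto
        next
          case 3
          have "\<And>x. a \<le> x \<Longrightarrow> x \<le> 0 \<Longrightarrow> ((\<lambda>t. F (p + t *\<^sub>R w)) has_real_derivative D w (p + x *\<^sub>R w)) (at x)"
            using dv 3 by simp
          from MVT2[OF 3 this] obtain \<xi> where "a < \<xi>" "\<xi> < 0" "F (p + 0 *\<^sub>R w) - F (p + a *\<^sub>R w) = (0 - a) * D w (p + \<xi> *\<^sub>R w)"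
            by blast
          then show ?thesis by (intro exI[of _ \<xi>]) (auto simp: algebra_simps)
        qed
      qed
      then obtain \<xi> where \<xi>: "\<bar>\<xi>\<bar> \<le> \<bar>a\<bar>" "F (p + a *\<^sub>R w) - F p = a * D w (p + \<xi> *\<^sub>R w)" by blast
      have "dist (D w (p + \<xi> *\<^sub>R w)) (D w z) < \<epsilon>'"
        using dd(2)[OF w _ inS[OF \<xi>(1)] close[OF \<xi>(1)]] QQ' z by blast
      then have "\<bar>a * D w (p + \<xi> *\<^sub>R w) - a * D w z\<bar> \<le> \<bar>a\<bar> * \<epsilon>'"
        by (simp add: dist_real_def abs_mult flip: right_diff_distrib) (simp add: mult_left_mono)
      also have "\<dots> \<le> \<epsilon>' * norm h" unfolding a_def using Basis_le_norm[OF w, of h] \<epsilon>'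
        by (simp add: mult.commute mult_left_mono)
      finally have one: "\<bar>F (p + a *\<^sub>R w) - F p - a * D w z\<bar> \<le> \<epsilon>' * norm h" using \<xi>(2) by simp
      have eqs: "z + (\<Sum>u\<in>insert w T. (h \<bullet> u) *\<^sub>R u) = p + a *\<^sub>R w"
        "(\<Sum>u\<in>insert w T. (h \<bullet> u) * D u z) = a * D w z + (\<Sum>u\<in>T. (h \<bullet> u) * D u z)"
        using insert(1,2) unfolding p_def a_def by (simp_all add: algebra_simps)
      have "\<bar>F (p + a *\<^sub>R w) - F z - (a * D w z + (\<Sum>u\<in>T. (h \<bullet> u) * D u z))\<bar>
          \<le> \<bar>F (p + a *\<^sub>R w) - F p - a * D w z\<bar> + \<bar>F p - F z - (\<Sum>u\<in>T. (h \<bullet> u) * D u z)\<bar>"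
        by linarith
      also have "\<dots> \<le> \<epsilon>' * norm h + real (card T) * \<epsilon>' * norm h"
        using one insert(3)[OF TB] unfolding p_def by linarith
      finally have X: "\<bar>F (p + a *\<^sub>R w) - F z - (a * D w z + (\<Sum>u\<in>T. (h \<bullet> u) * D u z))\<bar>
          \<le> \<epsilon>' * norm h + real (card T) * \<epsilon>' * norm h" .
      show ?case unfolding eqs using X insert(1,2) by (simp add: algebra_simps)
    qed
    have "\<bar>F (z + (\<Sum>u\<in>Basis. (h \<bullet> u) *\<^sub>R u)) - F z - (\<Sum>u\<in>Basis. (h \<bullet> u) * D u z)\<bar>
          \<le> n * \<epsilon>' * norm h" using step[of Basis] unfolding n_def by simp
    then show "\<bar>F (z + h) - F z - (\<Sum>u\<in>Basis. (h \<bullet> u) * D u z)\<bar> \<le> \<epsilon> * norm h"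
      using n1 unfolding \<epsilon>'_def by (simp add: euclidean_representation)
  qed
qed

lemma gronwall_touch:
  fixes xf m :: "real \<Rightarrow> real"
  assumes "0 < t" "(xf has_real_derivative c) (at t)" "(m has_real_derivative d) (at t)"
    "c < d" "xf t = m t" "\<And>s. 0 \<le> s \<Longrightarrow> s < t \<Longrightarrow> xf s < m s"
  shows False
proof -
  have "((\<lambda>s. xf s - m s) has_real_derivative c - d) (at t)"
    using assms(2,3) by (rule DERIV_diff)
  from DERIV_neg_dec_left[OF this] assms(4) obtain e where e: "e > 0"
    "\<And>h. h > 0 \<Longrightarrow> h < e \<Longrightarrow> xf t - m t < xf (t - h) - m (t - h)" by auto
  define h where "h = min (e/2) (t/2)"
  have "h > 0" "h < e" "t - h \<ge> 0" "t - h < t" using e assms(1) by (auto simp: h_def)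
  then show False using e(2)[of h] assms(5) assms(6)[of "t - h"] by auto
qed

lemma gronwall:
  fixes \<psi> \<psi>' :: "real \<Rightarrow> real"
  assumes L: "L > 0" and K: "K \<ge> 0"
    and cont: "continuous_on {0..1} \<psi>" and init: "\<psi> 0 = 0"
    and der: "\<And>t. 0 < t \<Longrightarrow> t \<le> 1 \<Longrightarrow> (\<psi> has_real_derivative \<psi>' t) (at t)"
    and bd: "\<And>t. 0 < t \<Longrightarrow> t \<le> 1 \<Longrightarrow> \<bar>\<psi>' t\<bar> \<le> L * \<bar>\<psi> t\<bar> + K"
    and t: "0 \<le> t" "t \<le> 1"
  shows "\<bar>\<psi> t\<bar> \<le> K / L * exp (2 * L)"
proof -
  have main: "\<bar>\<psi> t\<bar> < (K / L + \<epsilon>) * exp (2 * L * t) - K / L" if eps: "\<epsilon> > 0" for \<epsilon>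
  proof (rule ccontr)
    define m where "m = (\<lambda>t. (K / L + \<epsilon>) * exp (2 * L * t) - K / L)"
    have mder: "(m has_real_derivative (K / L + \<epsilon>) * (exp (2 * L * s) * (2 * L))) (at s)" for s
      unfolding m_def by (auto intro!: derivative_eq_intros)
    have mge: "m s \<ge> \<epsilon>" if "s \<ge> 0" for s
    proof -
      have "exp (2 * L * s) \<ge> 1" using that L by simp
      then have "(K / L + \<epsilon>) * exp (2 * L * s) \<ge> (K / L + \<epsilon>) * 1"
        using K L eps by (intro mult_left_mono) auto
      then show ?thesis unfolding m_def by simp
    qed
    define g where "g = (\<lambda>s. m s - \<bar>\<psi> s\<bar>)"
    have gc: "continuous_on {0..1} g" unfolding g_def m_def
      by (intro continuous_intros cont)
    define Z where "Z = {0..1} \<inter> g -` {..0}"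
    assume "\<not> \<bar>\<psi> t\<bar> < (K / L + \<epsilon>) * exp (2 * L * t) - K / L"
    then have "t \<in> Z" using t unfolding Z_def g_def m_def by auto
    then have Zne: "Z \<noteq> {}" by auto
    have Zc: "closed Z" unfolding Z_def by (intro continuous_closed_preimage gc) auto
    define ts where "ts = Inf Z"
    have tsZ: "ts \<in> Z" unfolding ts_def
      by (rule closed_contains_Inf[OF Zne _ Zc]) (auto simp: Z_def bdd_below_def)
    have before: "s \<notin> Z" if "s < ts" for s using that unfolding ts_def
      by (metis cInf_lower bdd_below_def Z_def IntE atLeastAtMost_iff linorder_not_le)
    have ts01: "0 \<le> ts" "ts \<le> 1" using tsZ unfolding Z_def by auto
    have gts: "g ts \<le> 0" using tsZ unfolding Z_def by auto
    have ts0: "ts > 0"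
    proof (rule ccontr)
      assume "\<not> ts > 0" then have "ts = 0" using ts01 by simp
      then show False using gts mge[of 0] eps init unfolding g_def by simp
    qed
    have lt: "\<bar>\<psi> s\<bar> < m s" if "0 \<le> s" "s < ts" for s
      using before[OF that(2)] that ts01 unfolding Z_def g_def by auto
    have geq: "g ts = 0"
    proof (rule ccontr)
      assume "g ts \<noteq> 0" then have "g ts < 0" using gts by simp
      then obtain d where d: "d > 0" "\<And>s. s \<in> {0..1} \<Longrightarrow> dist s ts < d \<Longrightarrow> dist (g s) (g ts) < - g ts"
        using gc ts01 unfolding continuous_on_iff by (metis atLeastAtMost_iff neg_0_less_iff_less)
      define s where "s = max 0 (ts - d/2)"
      have "s \<in> {0..1}" "dist s ts < d" "s < ts" using d ts0 ts01 by (auto simp: s_def dist_real_def)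
      then have "g s < 0" using d(2)[of s] by (auto simp: dist_real_def)
      then have "s \<in> Z" using \<open>s \<in> {0..1}\<close> unfolding Z_def by auto
      then show False using before[OF \<open>s < ts\<close>] by simp
    qed
    have dlt: "L * m ts + K < (K / L + \<epsilon>) * (exp (2 * L * ts) * (2 * L))"
    proof -
      have "L * m ts + K = (K + L * \<epsilon>) * exp (2 * L * ts)" unfolding m_def using L
        by (simp add: field_simps)
      also have "\<dots> < 2 * (K + L * \<epsilon>) * exp (2 * L * ts)"
      proof -
        have "0 < L * \<epsilon>" using L eps by simp
        then have "0 < K + L * \<epsilon>" using K by linarith
        then show ?thesis by simp
      qed
      also have "\<dots> = (K / L + \<epsilon>) * (exp (2 * L * ts) * (2 * L))" using L by (simp add: field_simps)
      finally show ?thesis .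
    qed
    have bts: "\<bar>\<psi>' ts\<bar> \<le> L * m ts + K" using bd[OF ts0 ts01(2)] geq unfolding g_def by simp
    show False
    proof (cases "\<psi> ts \<ge> 0")
      case True
      show False
      proof (rule gronwall_touch[OF ts0 der[OF ts0 ts01(2)] mder])
        show "\<psi>' ts < (K / L + \<epsilon>) * (exp (2 * L * ts) * (2 * L))" using bts dlt by linarith
        show "\<psi> ts = m ts" using geq True unfolding g_def by simp
        show "\<And>s. 0 \<le> s \<Longrightarrow> s < ts \<Longrightarrow> \<psi> s < m s" using lt by force
      qed
    next
      case False
      show False
      proof (rule gronwall_touch[OF ts0 DERIV_minus[OF der[OF ts0 ts01(2)]] mder])
        show "- \<psi>' ts < (K / L + \<epsilon>) * (exp (2 * L * ts) * (2 * L))" using bts dlt by linarith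
        show "- \<psi> ts = m ts" using geq False unfolding g_def by simp
        show "\<And>s. 0 \<le> s \<Longrightarrow> s < ts \<Longrightarrow> - \<psi> s < m s" using lt by force
      qed
    qed
  qed
  show ?thesis
  proof (rule field_le_epsilon)
    fix e :: real assume e: "e > 0"
    define \<epsilon> where "\<epsilon> = e / exp (2 * L)"
    have "\<epsilon> > 0" using e by (simp add: \<epsilon>_def)
    have ex: "exp (2 * L * t) \<le> exp (2 * L)" using t L by simp
    have "\<bar>\<psi> t\<bar> < (K / L + \<epsilon>) * exp (2 * L * t) - K / L" by (rule main) fact
    also have "\<dots> \<le> (K / L + \<epsilon>) * exp (2 * L)"
      using ex K L \<open>\<epsilon> > 0\<close> by (smt (verit) divide_nonneg_pos mult_left_mono)
    also have "\<dots> = K / L * exp (2 * L) + e" unfolding \<epsilon>_def by (simp add: field_simps)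
    finally show "\<bar>\<psi> t\<bar> \<le> K / L * exp (2 * L) + e" by simp
  qed
qed

lemma cont_G_comp:
  fixes G :: "real \<Rightarrow> real \<Rightarrow> real"
  assumes Gc: "continuous_on UNIV (\<lambda>p. G (fst p) (snd p))" and h: "continuous_on S h"
  shows "continuous_on S (\<lambda>s. G s (h s))"
proof -
  have "continuous_on S (\<lambda>s. (s, h s))" by (intro continuous_intros h)
  from continuous_on_compose2[OF Gc this] show ?thesis by simp
qed

lemma integral_exp_0:
  fixes \<Lambda> x :: real assumes "\<Lambda> > 0" "x \<ge> 0"
  shows "integral {0..x} (\<lambda>s. exp (\<Lambda> * s)) = (exp (\<Lambda> * x) - 1) / \<Lambda>"
proof -
  have "((\<lambda>s. exp (\<Lambda> * s)) has_integral (exp (\<Lambda> * x) / \<Lambda> - exp (\<Lambda> * 0) / \<Lambda>)) {0..x}"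
  proof (rule fundamental_theorem_of_calculus[OF assms(2)])
    fix s assume "s \<in> {0..x}"
    have "((\<lambda>s. exp (\<Lambda> * s) / \<Lambda>) has_real_derivative exp (\<Lambda> * s) * \<Lambda> / \<Lambda>) (at s within {0..x})"
      by (auto intro!: derivative_eq_intros)
    then show "((\<lambda>s. exp (\<Lambda> * s) / \<Lambda>) has_vector_derivative exp (\<Lambda> * s)) (at s within {0..x})"
      using assms(1) by (simp add: has_real_derivative_iff_has_vector_derivative)
  qed
  then show ?thesis by (simp add: integral_unique diff_divide_distrib)
qed

lemma ode_exists:
  fixes G :: "real \<Rightarrow> real \<Rightarrow> real"
  assumes Gc: "continuous_on UNIV (\<lambda>p. G (fst p) (snd p))"
    and lip: "\<And>t v w. \<bar>G t v - G t w\<bar> \<le> L * \<bar>v - w\<bar>" and L: "L \<ge> 0"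
    and bnd: "\<And>t w. \<bar>G t w\<bar> \<le> B"
  shows "\<exists>u. u 0 = v0 \<and> continuous_on {0..2} u \<and>
           (\<forall>t. 0 < t \<and> t < 2 \<longrightarrow> (u has_real_derivative G t (u t)) (at t))"
proof -
  define \<Lambda> where "\<Lambda> = 2 * L + 1"
  have \<Lambda>: "\<Lambda> > 0" "L / \<Lambda> \<le> 1/2" using L by (auto simp: \<Lambda>_def field_simps)
  define c where "c = (\<lambda>t::real. max 0 (min 2 t))"
  have cc: "continuous_on UNIV c" unfolding c_def by (intro continuous_intros)
  have c02: "c t \<in> {0..2}" for t unfolding c_def by auto
  have cid: "t \<in> {0..2} \<Longrightarrow> c t = t" for t unfolding c_def by auto
  define k where "k = (\<lambda>(\<phi>::real \<Rightarrow>\<^sub>C real) s. G s (exp (\<Lambda> * c s) * \<phi> s))"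
  have kc: "continuous_on S (k \<phi>)" for \<phi> S unfolding k_def
    by (intro cont_G_comp[OF Gc] continuous_intros continuous_on_compose2[OF continuous_on_exp]
        continuous_on_subset[OF cc]) auto
  have kint: "k \<phi> integrable_on {a..b}" for \<phi> a b
    by (rule integrable_continuous_interval[OF kc])
  define P where "P = (\<lambda>\<phi> t. exp (- \<Lambda> * c t) * (v0 + integral {0..c t} (k \<phi>)))"
  have ib: "\<bar>integral {0..x} (k \<phi>)\<bar> \<le> 2 * B" if "x \<in> {0..2}" for \<phi> x
  proof -
    have "norm (integral {0..x} (k \<phi>)) \<le> integral {0..x} (\<lambda>s. B)"
      by (rule integral_norm_bound_integral) (use kint in \<open>auto simp: k_def bnd\<close>)
    also have "\<dots> = x * B" using that by simp
    also have "\<dots> \<le> 2 * B" using that bnd[of 0 0] by (intro mult_right_mono) auto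
    finally show ?thesis by simp
  qed
  have Pb: "P \<phi> \<in> bcontfun" for \<phi>
  proof (rule bcontfun_normI)
    have "continuous_on {0..2} (\<lambda>x. integral {0..x} (k \<phi>))"
      by (rule indefinite_integral_continuous_1[OF kint])
    then have "continuous_on UNIV (\<lambda>t. integral {0..c t} (k \<phi>))"
      using continuous_on_compose2[OF _ cc, of "{0..2}"] c02 by blast
    then show "continuous_on UNIV (P \<phi>)" unfolding P_def
      by (intro continuous_intros continuous_on_compose2[OF continuous_on_exp] cc) auto
    fix t
    have e1: "exp (- \<Lambda> * c t) \<le> 1" using \<Lambda> c02[of t] by simp
    have "norm (P \<phi> t) = exp (- \<Lambda> * c t) * \<bar>v0 + integral {0..c t} (k \<phi>)\<bar>"
      unfolding P_def by (simp add: abs_mult)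
    also have "\<dots> \<le> 1 * \<bar>v0 + integral {0..c t} (k \<phi>)\<bar>" using e1 by (intro mult_right_mono) auto
    also have "\<dots> \<le> \<bar>v0\<bar> + 2 * B" using ib[OF c02[of t], of \<phi>] abs_triangle_ineq[of v0 "integral {0..c t} (k \<phi>)"] by simp
    finally show "norm (P \<phi> t) \<le> \<bar>v0\<bar> + 2 * B" .
  qed
  define T where "T = (\<lambda>\<phi>. Bcontfun (P \<phi>))"
  have Tap: "apply_bcontfun (T \<phi>) = P \<phi>" for \<phi> unfolding T_def using Pb by (simp add: Bcontfun_inverse)
  have contr: "dist (T \<phi>) (T \<psi>) \<le> 1/2 * dist \<phi> \<psi>" for \<phi> \<psi>
  proof (rule dist_bound)
    fix t
    define d where "d = dist \<phi> \<psi>"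
    define x where "x = c t"
    have x: "x \<in> {0..2}" unfolding x_def by (rule c02)
    have pt: "\<bar>k \<phi> s - k \<psi> s\<bar> \<le> L * d * exp (\<Lambda> * s)" if "s \<in> {0..x}" for s
    proof -
      have s2: "s \<in> {0..2}" using that x by auto
      have "\<bar>k \<phi> s - k \<psi> s\<bar> \<le> L * \<bar>exp (\<Lambda> * c s) * \<phi> s - exp (\<Lambda> * c s) * \<psi> s\<bar>"
        unfolding k_def by (rule lip)
      also have "\<dots> = L * (exp (\<Lambda> * s) * \<bar>\<phi> s - \<psi> s\<bar>)"
        using cid[OF s2] by (simp add: abs_mult right_diff_distrib[symmetric])
      also have "\<dots> \<le> L * (exp (\<Lambda> * s) * d)"
        using dist_bounded[of \<phi> s \<psi>] L unfolding d_def dist_real_def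
        by (intro mult_left_mono) auto
      finally show ?thesis by (simp add: algebra_simps)
    qed
    have "\<bar>integral {0..x} (k \<phi>) - integral {0..x} (k \<psi>)\<bar> = norm (integral {0..x} (\<lambda>s. k \<phi> s - k \<psi> s))"
      by (simp add: integral_diff kint)
    also have "\<dots> \<le> integral {0..x} (\<lambda>s. L * d * exp (\<Lambda> * s))"
      by (rule integral_norm_bound_integral)
        (auto intro!: integrable_diff kint integrable_continuous_interval continuous_intros pt kc)
    also have "\<dots> = L * d * ((exp (\<Lambda> * x) - 1) / \<Lambda>)"
      using integral_exp_0[OF \<Lambda>(1), of x] x by simp
    finally have I: "\<bar>integral {0..x} (k \<phi>) - integral {0..x} (k \<psi>)\<bar> \<le> L * d * ((exp (\<Lambda> * x) - 1) / \<Lambda>)" .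
    have "dist (T \<phi> t) (T \<psi> t) = exp (- \<Lambda> * x) * \<bar>integral {0..x} (k \<phi>) - integral {0..x} (k \<psi>)\<bar>"
      unfolding Tap P_def dist_real_def x_def by (simp add: abs_mult right_diff_distrib[symmetric])
    also have "\<dots> \<le> exp (- \<Lambda> * x) * (L * d * ((exp (\<Lambda> * x) - 1) / \<Lambda>))"
      using I by (intro mult_left_mono) auto
    also have "\<dots> = L * d * (1 - exp (- \<Lambda> * x)) / \<Lambda>"
      using \<Lambda> by (simp add: field_simps exp_minus)
    also have "\<dots> \<le> L * d * 1 / \<Lambda>"
      using L \<Lambda> x unfolding d_def by (intro divide_right_mono mult_left_mono) auto
    also have "\<dots> = (L / \<Lambda>) * d" by simp
    also have "\<dots> \<le> 1/2 * d" using \<Lambda>(2) unfolding d_def by (intro mult_right_mono) auto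
    finally show "dist (T \<phi> t) (T \<psi> t) \<le> 1/2 * dist \<phi> \<psi>" unfolding d_def .
  qed
  obtain \<phi> where fixp: "T \<phi> = \<phi>" using banach_fix_type[of "1/2" T] contr by auto
  define u where "u = (\<lambda>t. exp (\<Lambda> * c t) * \<phi> t)"
  have uc: "continuous_on S u" for S unfolding u_def
    by (intro continuous_intros continuous_on_compose2[OF continuous_on_exp] continuous_on_subset[OF cc]) auto
  have keq: "k \<phi> s = G s (u s)" for s unfolding k_def u_def by simp
  have ueq: "u t = v0 + integral {0..t} (\<lambda>s. G s (u s))" if "t \<in> {0..2}" for t
  proof -
    have "\<phi> t = P \<phi> t" using fixp Tap by metis
    then have "u t = exp (\<Lambda> * c t) * (exp (- \<Lambda> * c t) * (v0 + integral {0..c t} (k \<phi>)))"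
      unfolding u_def P_def by simp
    also have "\<dots> = v0 + integral {0..t} (k \<phi>)" using cid[OF that]
      by (simp add: exp_minus field_simps)
    finally show ?thesis unfolding keq .
  qed
  show ?thesis
  proof (intro exI[of _ u] conjI allI impI)
    show "u 0 = v0" using ueq[of 0] by simp
    show "continuous_on {0..2} u" by (rule uc)
    fix t :: real assume t: "0 < t \<and> t < 2"
    have gc: "continuous_on {0..2} (\<lambda>s. G s (u s))" by (rule cont_G_comp[OF Gc uc])
    have "((\<lambda>x. integral {0..x} (\<lambda>s. G s (u s))) has_real_derivative G t (u t)) (at t within {0..2})"
      using integral_has_real_derivative[OF gc, of t] t by auto
    then have "((\<lambda>x. integral {0..x} (\<lambda>s. G s (u s))) has_real_derivative G t (u t)) (at t)"
      using t by (subst (asm) at_within_interior) auto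
    then have "((\<lambda>x. v0 + integral {0..x} (\<lambda>s. G s (u s))) has_real_derivative G t (u t)) (at t)"
      by (auto intro!: derivative_eq_intros)
    then show "(u has_real_derivative G t (u t)) (at t)"
      by (rule has_field_derivative_transform_within_open[of _ _ _ "{0<..<2}"])
        (use t ueq in auto)
  qed
qed

lemma crossing_core:
  fixes u u' m :: "real \<Rightarrow> real"
  assumes uc: "continuous_on {0..1} u"
    and ud: "\<And>s. 0 < s \<Longrightarrow> s < 1 \<Longrightarrow> (u has_real_derivative u' s) (at s)"
    and ub: "\<And>s. 0 < s \<Longrightarrow> s < 1 \<Longrightarrow> \<bar>u' s\<bar> \<le> m (u s)"
    and mc: "continuous_on UNIV m" and mp: "\<And>w. m w > 0"
    and lohi: "\<And>s. 0 \<le> s \<Longrightarrow> s \<le> 1 \<Longrightarrow> lo < u s \<and> u s < hi"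
    and t: "0 \<le> t" "t \<le> 1"
  shows "\<bar>integral {lo..u t} (\<lambda>w. 1 / m w) - integral {lo..u 0} (\<lambda>w. 1 / m w)\<bar> \<le> 1"
proof -
  define g where "g = (\<lambda>w. 1 / m w)"
  define H where "H = (\<lambda>w. integral {lo..w} g)"
  have gc: "continuous_on S g" for S unfolding g_def
    using mp by (intro continuous_intros continuous_on_subset[OF mc]) (auto simp: less_imp_neq[symmetric])
  have Hd: "(H has_real_derivative g w) (at w)" if "lo < w" "w < hi" for w
  proof -
    have "(H has_real_derivative g w) (at w within {lo..hi})"
      unfolding H_def by (rule integral_has_real_derivative[OF gc]) (use that in auto)
    then show ?thesis using that by (subst (asm) at_within_interior) auto
  qed
  have Hc: "continuous_on {lo..hi} H" unfolding H_def
    by (rule indefinite_integral_continuous_1[OF integrable_continuous_interval[OF gc]])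
  show ?thesis
  proof (cases "t = 0")
    case True then show ?thesis by simp
  next
    case False
    then have t0: "0 < t" using t by simp
    have sub: "u ` {0..t} \<subseteq> {lo..hi}"
    proof safe
      fix s assume "s \<in> {0..t}"
      then have "lo < u s \<and> u s < hi" using lohi t by auto
      then show "u s \<in> {lo..hi}" by auto
    qed
    have Huc: "continuous_on {0..t} (\<lambda>s. H (u s))"
      by (rule continuous_on_compose2[OF Hc continuous_on_subset[OF uc] sub]) (use t in auto)
    have Hud: "((\<lambda>s. H (u s)) has_real_derivative g (u s) * u' s) (at s)" if "0 < s" "s < t" for s
      using DERIV_chain2[OF Hd ud] lohi[of s] that t by auto
    from MVT[OF t0 Huc] Hud obtain l z where z: "0 < z" "z < t" "((\<lambda>s. H (u s)) has_real_derivative l) (at z)"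
      "H (u t) - H (u 0) = (t - 0) * l" by (metis real_differentiable_def)
    have "l = g (u z) * u' z" using DERIV_unique[OF z(3) Hud[OF z(1,2)]] .
    moreover have "\<bar>g (u z) * u' z\<bar> \<le> 1"
    proof -
      have "\<bar>u' z\<bar> \<le> m (u z)" using ub z t by auto
      then show ?thesis unfolding g_def using mp[of "u z"] by (simp add: abs_mult field_simps)
    qed
    ultimately have "\<bar>H (u t) - H (u 0)\<bar> \<le> t * 1" using z(4) t
      by (metis abs_mult abs_of_nonneg mult_left_mono diff_zero)
    then show ?thesis using t unfolding H_def g_def by simp
  qed
qed

lemma crossing:
  fixes u u' m :: "real \<Rightarrow> real"
  assumes uc: "continuous_on {0..1} u"
    and ud: "\<And>s. 0 < s \<Longrightarrow> s < 1 \<Longrightarrow> (u has_real_derivative u' s) (at s)"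
    and ub: "\<And>s. 0 < s \<Longrightarrow> s < 1 \<Longrightarrow> \<bar>u' s\<bar> \<le> m (u s)"
    and mc: "continuous_on UNIV m" and mp: "\<And>w. m w > 0"
    and t: "0 \<le> t" "t \<le> 1"
  shows "u t \<le> a \<Longrightarrow> a \<le> u 0 \<Longrightarrow> integral {a..u 0} (\<lambda>w. 1 / m w) \<le> 1"
    and "u 0 \<le> a \<Longrightarrow> a \<le> u t \<Longrightarrow> integral {u 0..a} (\<lambda>w. 1 / m w) \<le> 1"
proof -
  define g where "g = (\<lambda>w. 1 / m w)"
  have gc: "continuous_on S g" for S unfolding g_def
    using mp by (intro continuous_intros continuous_on_subset[OF mc]) (auto simp: less_imp_neq[symmetric])
  have gi: "g integrable_on {x..y}" for x y by (rule integrable_continuous_interval[OF gc])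
  have gp: "g w \<ge> 0" for w unfolding g_def using mp[of w] by simp
  have "bounded (u ` {0..1})" using compact_continuous_image[OF uc compact_Icc] compact_imp_bounded by blast
  then obtain R where R: "\<And>s. s \<in> {0..1} \<Longrightarrow> \<bar>u s\<bar> \<le> R"
    unfolding bounded_iff by force
  define lo where "lo = - R - \<bar>a\<bar> - 1"
  define hi where "hi = R + \<bar>a\<bar> + 1"
  have lohi: "lo < u s \<and> u s < hi" if "0 \<le> s" "s \<le> 1" for s
    using R[of s] that unfolding lo_def hi_def by auto
  have alo: "lo < a" unfolding lo_def using R[of 0] by auto
  have core: "\<bar>integral {lo..u t} g - integral {lo..u 0} g\<bar> \<le> 1"
    using crossing_core[OF uc ud ub mc mp lohi t] unfolding g_def by blast
  have comb: "integral {lo..x} g + integral {x..y} g = integral {lo..y} g" if "lo \<le> x" "x \<le> y" for x y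
    by (rule Henstock_Kurzweil_Integration.integral_combine[OF that gi])
  show "u t \<le> a \<Longrightarrow> a \<le> u 0 \<Longrightarrow> integral {a..u 0} (\<lambda>w. 1 / m w) \<le> 1"
  proof -
    assume a: "u t \<le> a" "a \<le> u 0"
    have "integral {u t..a} g \<ge> 0" by (rule integral_nonneg[OF gi]) (use gp in auto)
    moreover have "integral {lo..u t} g + integral {u t..a} g = integral {lo..a} g"
      using comb a lohi t by (meson less_imp_le)
    moreover have "integral {lo..a} g + integral {a..u 0} g = integral {lo..u 0} g"
      using comb a alo by (meson less_imp_le)
    ultimately show ?thesis using core unfolding g_def by linarith
  qed
  show "u 0 \<le> a \<Longrightarrow> a \<le> u t \<Longrightarrow> integral {u 0..a} (\<lambda>w. 1 / m w) \<le> 1"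
  proof -
    assume a: "u 0 \<le> a" "a \<le> u t"
    have "integral {a..u t} g \<ge> 0" by (rule integral_nonneg[OF gi]) (use gp in auto)
    moreover have "integral {lo..u 0} g + integral {u 0..a} g = integral {lo..a} g"
      using comb a lohi[of 0] by (meson less_imp_le order_refl zero_le_one)
    moreover have "integral {lo..a} g + integral {a..u t} g = integral {lo..u t} g"
      using comb a alo by (meson less_imp_le)
    ultimately show ?thesis using core unfolding g_def by linarith
  qed
qed

lemma min_integral_limit:
  fixes f :: "real \<Rightarrow> real"
  assumes fi: "(\<lambda>s. 1 / f s) integrable_on {x..y}" and fp: "\<And>s. s \<in> {x..y} \<Longrightarrow> f s > 0"
    and A: "A > 0"
  shows "(\<lambda>k. integral {x..y} (\<lambda>s. min (1 / (A * f s)) (real k + 1))) \<longlonglongrightarrow> integral {x..y} (\<lambda>s. 1 / f s) / A"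
    and "\<And>k. (\<lambda>s. min (1 / (A * f s)) (real k + 1)) integrable_on {x..y}"
proof -
  have gi: "(\<lambda>s. 1 / (A * f s)) integrable_on {x..y}"
    using integrable_on_cmult_left[OF fi, of "1/A"] by simp
  have ga: "(\<lambda>s. 1 / (A * f s)) absolutely_integrable_on {x..y}"
    by (rule nonnegative_absolutely_integrable_1[OF gi]) (use fp A in \<open>auto intro: less_imp_le\<close>)
  have ca: "(\<lambda>s. real k + 1) absolutely_integrable_on {x..y}" for k
    by (rule nonnegative_absolutely_integrable_1) auto
  show mi: "(\<lambda>s. min (1 / (A * f s)) (real k + 1)) integrable_on {x..y}" for k
    using absolutely_integrable_min_1[OF ga ca[of k]] by (simp add: absolutely_integrable_on_def)
  have "(\<lambda>k. integral {x..y} (\<lambda>s. min (1 / (A * f s)) (real k + 1))) \<longlonglongrightarrow> integral {x..y} (\<lambda>s. 1 / (A * f s))"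
  proof (rule dominated_convergence(2)[OF mi gi])
    fix k s assume s: "s \<in> {x..y}"
    show "norm (min (1 / (A * f s)) (real k + 1)) \<le> 1 / (A * f s)"
      using fp[OF s] A by (simp add: abs_if)
  next
    fix s assume s: "s \<in> {x..y}"
    obtain N :: nat where "1 / (A * f s) \<le> real N" using real_arch_simple by blast
    then have "\<forall>\<^sub>F k in sequentially. min (1 / (A * f s)) (real k + 1) = 1 / (A * f s)"
      unfolding eventually_sequentially by (intro exI[of _ N]) auto
    then show "(\<lambda>k. min (1 / (A * f s)) (real k + 1)) \<longlonglongrightarrow> 1 / (A * f s)"
      by (rule tendsto_eventually)
  qed
  moreover have "integral {x..y} (\<lambda>s. 1 / (A * f s)) = integral {x..y} (\<lambda>s. 1 / f s) / A"
    using integral_mult_left[of "{x..y}" "\<lambda>s. 1 / f s" "1/A"] fi by (simp add: field_simps)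
  ultimately show "(\<lambda>k. integral {x..y} (\<lambda>s. min (1 / (A * f s)) (real k + 1))) \<longlonglongrightarrow> integral {x..y} (\<lambda>s. 1 / f s) / A"
    by simp
qed

lemma barrier:
  fixes u u' h f :: "real \<Rightarrow> real"
  assumes uc: "continuous_on {0..1} u"
    and ud: "\<And>s. 0 < s \<Longrightarrow> s < 1 \<Longrightarrow> (u has_real_derivative u' s) (at s)"
    and ub: "\<And>s. 0 < s \<Longrightarrow> s < 1 \<Longrightarrow> \<bar>u' s\<bar> \<le> h (u s)"
    and hc: "continuous_on UNIV h" and h0: "\<And>w. h w \<ge> 0"
    and hf: "\<And>w. m1 \<le> w \<Longrightarrow> w \<le> m2 \<Longrightarrow> h w \<le> A * f w"
    and fpos: "\<And>w. w > 0 \<Longrightarrow> f w > 0" and fint: "(\<lambda>s. 1 / f s) integrable_on {m1..m2}"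
    and A: "A > 0" and m: "0 < m1" "m1 \<le> u 0" "u 0 \<le> m2"
    and I1: "integral {m1..u 0} (\<lambda>s. 1 / f s) > A" and I2: "integral {u 0..m2} (\<lambda>s. 1 / f s) > A"
    and t: "0 \<le> t" "t \<le> 1"
  shows "m1 < u t \<and> u t < m2"
proof -
  define mk where "mk = (\<lambda>(k::nat) w. max (1 / (real k + 1)) (h w))"
  have mkc: "continuous_on UNIV (mk k)" for k unfolding mk_def by (intro continuous_intros hc)
  have mkp: "mk k w > 0" for k w unfolding mk_def by (simp add: less_max_iff_disj)
  have ubk: "\<bar>u' s\<bar> \<le> mk k (u s)" if "0 < s" "s < 1" for s k
    using ub[OF that] unfolding mk_def by auto
  have cmp: "min (1 / (A * f w)) (real k + 1) \<le> 1 / mk k w" if "m1 \<le> w" "w \<le> m2" for w k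
  proof (cases "h w \<le> 1 / (real k + 1)")
    case True
    then have "mk k w = 1 / (real k + 1)" unfolding mk_def by simp
    then show ?thesis by simp
  next
    case False
    then have hp: "h w > 0" "mk k w = h w" unfolding mk_def
      by (auto intro: less_le_trans[of 0 "1/(real k + 1)"])
    have "1 / (A * f w) \<le> 1 / h w" using hf[OF that] hp(1) by (simp add: frac_le)
    then show ?thesis using hp(2) by simp
  qed
  have mki: "(\<lambda>w. 1 / mk k w) integrable_on {x..y}" for k x y
    using mkp by (intro integrable_continuous_interval continuous_intros continuous_on_subset[OF mkc])
      (auto simp: less_imp_neq[symmetric])
  have fsub: "(\<lambda>s. 1 / f s) integrable_on {x..y}" if "m1 \<le> x" "y \<le> m2" for x y
    by (rule integrable_on_subinterval[OF fint]) (use that in auto)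
  have contra: False if lim: "(\<lambda>k. integral {x..y} (\<lambda>s. min (1 / (A * f s)) (real k + 1))) \<longlonglongrightarrow> integral {x..y} (\<lambda>s. 1 / f s) / A"
    and mi: "\<And>k. (\<lambda>s. min (1 / (A * f s)) (real k + 1)) integrable_on {x..y}"
    and gt: "integral {x..y} (\<lambda>s. 1 / f s) > A"
    and le1: "\<And>k. integral {x..y} (\<lambda>w. 1 / mk k w) \<le> 1"
    and xy: "m1 \<le> x" "y \<le> m2" for x y
  proof -
    have "integral {x..y} (\<lambda>s. 1 / f s) / A > 1" using gt A by simp
    then have "\<forall>\<^sub>F k in sequentially. integral {x..y} (\<lambda>s. min (1 / (A * f s)) (real k + 1)) > 1"
      using lim order_tendstoD(1) by blast
    then obtain k where k: "integral {x..y} (\<lambda>s. min (1 / (A * f s)) (real k + 1)) > 1"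
      using eventually_sequentially by auto
    have "integral {x..y} (\<lambda>s. min (1 / (A * f s)) (real k + 1)) \<le> integral {x..y} (\<lambda>w. 1 / mk k w)"
      by (rule integral_le[OF mi mki]) (use cmp xy in auto)
    then show False using k le1[of k] by linarith
  qed
  have lo: "m1 < u t"
  proof (rule ccontr)
    assume "\<not> m1 < u t" then have a: "u t \<le> m1" by simp
    have le1: "integral {m1..u 0} (\<lambda>w. 1 / mk k w) \<le> 1" for k
      using crossing(1)[OF uc ud ubk mkc mkp t a m(2)] by blast
    show False
      using contra[OF min_integral_limit[OF fsub _ A] I1 le1] m fpos by auto
  qed
  have hi: "u t < m2"
  proof (rule ccontr)
    assume "\<not> u t < m2" then have a: "m2 \<le> u t" by simp
    have le1: "integral {u 0..m2} (\<lambda>w. 1 / mk k w) \<le> 1" for k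
      using crossing(2)[OF uc ud ubk mkc mkp t m(3) a] by blast
    show False
      using contra[OF min_integral_limit[OF fsub _ A] I2 le1] m fpos by auto
  qed
  show ?thesis using lo hi by simp
qed

lemma basis_vec_eq: "(Basis :: (real^'n) set) = range (\<lambda>k. axis k 1)"
  unfolding Basis_vec_def by auto

lemma sum_basis_vec: "(\<Sum>u\<in>(Basis :: (real^'n) set). f u) = (\<Sum>k\<in>UNIV. f (axis k 1))"
proof -
  have "inj (\<lambda>k::'n. axis k (1::real))" by (auto intro!: injI simp: axis_eq_axis)
  then show ?thesis unfolding basis_vec_eq by (simp add: sum.reindex)
qed

lemma sum_basis_pair:
  fixes f :: "(real^'n) \<times> real \<Rightarrow> real"
  shows "(\<Sum>u\<in>Basis. f u) = (\<Sum>k\<in>UNIV. f (axis k 1, 0)) + f (0, 1)"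
proof -
  have d: "(\<lambda>u. (u, 0::real)) ` (Basis :: (real^'n) set) \<inter> Pair (0::real^'n) ` (Basis :: real set) = {}"
    by auto
  have "(\<Sum>u\<in>Basis. f u) = (\<Sum>u\<in>(\<lambda>u. (u, 0::real)) ` (Basis :: (real^'n) set). f u) + (\<Sum>u\<in>Pair (0::real^'n) ` (Basis :: real set). f u)"
    unfolding Basis_prod_def by (rule sum.union_disjoint) (use d in auto)
  also have "(\<Sum>u\<in>(\<lambda>u. (u, 0::real)) ` (Basis :: (real^'n) set). f u) = (\<Sum>u\<in>(Basis :: (real^'n) set). f (u, 0))"
    by (rule sum.reindex_cong[where l="\<lambda>u. (u, 0)"]) (auto intro: inj_onI)
  also have "\<dots> = (\<Sum>k\<in>UNIV. f (axis k 1, 0))" by (rule sum_basis_vec)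
  finally show ?thesis by simp
qed

lemma inner_pair_basis:
  "(h :: (real^'n) \<times> real) \<bullet> (axis k 1, 0) = fst h $ k" "h \<bullet> (0, 1) = snd h"
  by (cases h; simp add: inner_axis)+

locale pfaff =
  fixes U :: "(real^'n) set" and b :: "real^'n \<Rightarrow> real \<Rightarrow> real^'n"
  assumes U_open: "open U"
    and b_smooth: "\<And>i. smooth_on (U \<times> {0<..}) (bcomp b i)"
    and b_compat: "\<And>i j x v. x \<in> U \<Longrightarrow> v > 0 \<Longrightarrow>
        pd_x j (bcomp b i) x v + (b x v $ j) * pd_v (bcomp b i) x v
      = pd_x i (bcomp b j) x v + (b x v $ i) * pd_v (bcomp b j) x v"
begin

definition "Om = U \<times> {0::real<..}"
definition "Dx j k x v = pd_x k (bcomp b j) x v"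
definition "Dv j x v = pd_v (bcomp b j) x v"
definition "Dz j u z = iter_pd [u] (bcomp b j) z"

lemma Om_open: "open Om" unfolding Om_def by (intro open_Times U_open open_greaterThan)

lemma bcomp_eq: "bcomp b j (x, v) = b x v $ j" unfolding bcomp_def by simp

lemma b_cont: "continuous_on Om (bcomp b j)"
  using b_smooth[of j] unfolding smooth_on_def Om_def by (metis empty_subsetI empty_set iter_pd.simps(1))

lemma Dz_cont: "u \<in> Basis \<Longrightarrow> continuous_on Om (Dz j u)"
  using b_smooth[of j] unfolding smooth_on_def Om_def Dz_def
  by (metis empty_subsetI empty_set insert_subset list.simps(15))

lemma b_der: "u \<in> Basis \<Longrightarrow> z \<in> Om \<Longrightarrow> ((\<lambda>t. bcomp b j (z + t *\<^sub>R u)) has_real_derivative Dz j u z) (at 0)"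
  using b_smooth[of j] unfolding smooth_on_def Om_def Dz_def
  by (metis empty_subsetI empty_set iter_pd.simps(1))

lemma Dz_x: "Dz j (axis k 1, 0) (x, v) = Dx j k x v"
  unfolding Dz_def Dx_def pd_x_def by simp
lemma Dz_v: "Dz j (0, 1) (x, v) = Dv j x v"
  unfolding Dz_def Dv_def pd_v_def by simp

definition "Db j z h = (\<Sum>k\<in>UNIV. fst h $ k * Dx j k (fst z) (snd z)) + snd h * Dv j (fst z) (snd z)"

lemma sum_Dz: "(\<Sum>u\<in>Basis. (h \<bullet> u) * Dz j u z) = Db j z h"
  unfolding sum_basis_pair Db_def inner_pair_basis by (cases z) (simp add: Dz_x Dz_v)

lemma b_unif:
  assumes "compact Q" "Q \<subseteq> Om" "\<epsilon> > 0"
  shows "\<exists>\<delta>>0. \<forall>z\<in>Q. \<forall>h. norm h < \<delta> \<longrightarrow> \<bar>bcomp b j (z + h) - bcomp b j z - Db j z h\<bar> \<le> \<epsilon> * norm h"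
  using unif_taylor[OF Om_open assms(1,2) b_der Dz_cont assms(3)] unfolding sum_Dz by blast

lemma b_has_derivative:
  assumes "z \<in> Om"
  shows "(bcomp b j has_derivative Db j z) (at z)"
proof -
  have bl: "bounded_linear (Db j z)" unfolding Db_def
    by (intro bounded_linear_add bounded_linear_sum bounded_linear_mult_const
        bounded_linear_compose[OF bounded_linear_vec_nth] bounded_linear_fst bounded_linear_snd)
  show ?thesis unfolding has_derivative_at_alt
  proof (intro conjI bl allI impI)
    fix e :: real assume "e > 0"
    have "\<exists>d>0. \<forall>h. norm h < d \<longrightarrow> \<bar>bcomp b j (z + h) - bcomp b j z - Db j z h\<bar> \<le> e * norm h"
      using b_unif[of "{z}" e j] assms \<open>e > 0\<close> by auto
    then obtain d where "d > 0"
      "\<And>h. norm h < d \<Longrightarrow> \<bar>bcomp b j (z + h) - bcomp b j z - Db j z h\<bar> \<le> e * norm h" by auto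
    then show "\<exists>d>0. \<forall>y. norm (y - z) < d \<longrightarrow> norm (bcomp b j y - bcomp b j z - Db j z (y - z)) \<le> e * norm (y - z)"
      by (metis add.commute diff_add_cancel real_norm_def)
  qed
qed

lemma b_chain:
  assumes "(\<gamma> has_vector_derivative g') (at t)" "\<gamma> t \<in> Om"
  shows "((\<lambda>s. bcomp b j (\<gamma> s)) has_real_derivative Db j (\<gamma> t) g') (at t)"
proof -
  have "((\<lambda>s. bcomp b j (\<gamma> s)) has_derivative (\<lambda>s. Db j (\<gamma> t) (s *\<^sub>R g'))) (at t)"
    using diff_chain_at[OF assms(1)[unfolded has_vector_derivative_def] b_has_derivative[OF assms(2)]]
    by (simp add: o_def)
  moreover have "Db j (\<gamma> t) (s *\<^sub>R g') = s * Db j (\<gamma> t) g'" for s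
    unfolding Db_def by (simp add: sum_distrib_left algebra_simps)
  ultimately show ?thesis by (simp add: has_field_derivative_def mult.commute[of _ "Db j (\<gamma> t) g'"])
qed

end

lemma compact_bound_fun:
  fixes F :: "'a::metric_space \<Rightarrow> real"
  assumes "compact Q" "continuous_on Q F"
  shows "\<exists>B. \<forall>z\<in>Q. \<bar>F z\<bar> \<le> B"
proof -
  have "bounded (F ` Q)" using compact_continuous_image[OF assms(2,1)] compact_imp_bounded by blast
  then show ?thesis unfolding bounded_iff by auto
qed

context pfaff begin

lemma b_bound:
  assumes "compact Q" "Q \<subseteq> Om"
  shows "\<exists>B\<ge>0. \<forall>z\<in>Q. \<forall>j. \<bar>bcomp b j z\<bar> \<le> B"
proof -
  have "continuous_on Q (\<lambda>z. \<Sum>j\<in>UNIV. \<bar>bcomp b j z\<bar>)"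
    by (intro continuous_intros continuous_on_subset[OF b_cont assms(2)])
  from compact_bound_fun[OF assms(1) this] obtain B where B: "\<forall>z\<in>Q. \<bar>\<Sum>j\<in>UNIV. \<bar>bcomp b j z\<bar>\<bar> \<le> B" by blast
  have "\<bar>bcomp b j z\<bar> \<le> max B 0" if "z \<in> Q" for z j
  proof -
    have "\<bar>bcomp b j z\<bar> \<le> (\<Sum>j\<in>UNIV. \<bar>bcomp b j z\<bar>)"
      by (rule member_le_sum) auto
    then show ?thesis using B that by fastforce
  qed
  then show ?thesis by (intro exI[of _ "max B 0"]) auto
qed

lemma D_bound:
  assumes "compact Q" "Q \<subseteq> Om"
  shows "\<exists>B\<ge>0. \<forall>z\<in>Q. \<forall>j k. \<bar>Dx j k (fst z) (snd z)\<bar> \<le> B \<and> \<bar>Dv j (fst z) (snd z)\<bar> \<le> B"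
proof -
  have c: "continuous_on Q (\<lambda>z. \<Sum>j\<in>UNIV. (\<Sum>k\<in>UNIV. \<bar>Dz j (axis k 1, 0) z\<bar>) + \<bar>Dz j (0, 1) z\<bar>)"
    by (intro continuous_intros continuous_on_subset[OF Dz_cont assms(2)])
      (auto simp: Basis_prod_def basis_vec_eq)
  from compact_bound_fun[OF assms(1) c] obtain B where
    B: "\<forall>z\<in>Q. \<bar>\<Sum>j\<in>UNIV. (\<Sum>k\<in>UNIV. \<bar>Dz j (axis k 1, 0) z\<bar>) + \<bar>Dz j (0, 1) z\<bar>\<bar> \<le> B" by blast
  have "\<bar>Dx j k (fst z) (snd z)\<bar> \<le> max B 0 \<and> \<bar>Dv j (fst z) (snd z)\<bar> \<le> max B 0" if "z \<in> Q" for z j k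
  proof -
    have e1: "Dx j k (fst z) (snd z) = Dz j (axis k 1, 0) z" "Dv j (fst z) (snd z) = Dz j (0, 1) z"
      by (cases z; simp add: Dz_x Dz_v)+
    have "\<bar>Dz j (axis k 1, 0) z\<bar> \<le> (\<Sum>k\<in>UNIV. \<bar>Dz j (axis k 1, 0) z\<bar>)" by (rule member_le_sum) auto
    moreover have "(\<Sum>k\<in>UNIV. \<bar>Dz j (axis k 1, 0) z\<bar>) + \<bar>Dz j (0, 1) z\<bar> \<le>
        (\<Sum>j\<in>UNIV. (\<Sum>k\<in>UNIV. \<bar>Dz j (axis k 1, 0) z\<bar>) + \<bar>Dz j (0, 1) z\<bar>)"
      by (rule member_le_sum[where f="\<lambda>j. (\<Sum>k\<in>UNIV. \<bar>Dz j (axis k 1, 0) z\<bar>) + \<bar>Dz j (0, 1) z\<bar>"])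
        (auto intro: add_nonneg_nonneg sum_nonneg)
    moreover have "0 \<le> (\<Sum>k\<in>UNIV. \<bar>Dz j (axis k 1, 0) z\<bar>)" by (auto intro: sum_nonneg)
    ultimately show ?thesis using B that unfolding e1 by fastforce
  qed
  then show ?thesis by (intro exI[of _ "max B 0"]) auto
qed

lemma b_der_v:
  assumes "x \<in> U" "s > 0"
  shows "((\<lambda>w. b x w $ j) has_real_derivative Dv j x s) (at s)"
proof -
  have "(0::real^'n, 1::real) \<in> Basis" by (simp add: Basis_prod_def)
  from b_der[OF this, of "(x, s)" j] assms
  have "((\<lambda>t. bcomp b j ((x, s) + t *\<^sub>R (0, 1))) has_real_derivative Dv j x s) (at 0)"
    by (simp add: Om_def Dz_v)
  then have "((\<lambda>t. b x (t + s) $ j) has_real_derivative Dv j x s) (at 0)"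
    by (simp add: bcomp_eq add.commute)
  then show ?thesis using DERIV_shift[of "\<lambda>w. b x w $ j" "Dv j x s" 0 s] by simp
qed

lemma b_lip_v:
  assumes "compact Kx" "Kx \<subseteq> U" "0 < m1"
  shows "\<exists>L\<ge>0. \<forall>x\<in>Kx. \<forall>w\<in>{m1..m2}. \<forall>w'\<in>{m1..m2}. \<forall>j. \<bar>b x w $ j - b x w' $ j\<bar> \<le> L * \<bar>w - w'\<bar>"
proof -
  have Q: "compact (Kx \<times> {m1..m2})" "Kx \<times> {m1..m2} \<subseteq> Om"
    using assms by (auto simp: Om_def intro!: compact_Times)
  obtain B where B: "B \<ge> 0" "\<And>z j k. z \<in> Kx \<times> {m1..m2} \<Longrightarrow> \<bar>Dv j (fst z) (snd z)\<bar> \<le> B"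
    using D_bound[OF Q] by blast
  have main: "\<bar>b x w $ j - b x w' $ j\<bar> \<le> B * \<bar>w - w'\<bar>"
    if x: "x \<in> Kx" and w: "w \<in> {m1..m2}" "w' \<in> {m1..m2}" and lt: "w' < w" for x w w' j
  proof -
    have "\<And>s. w' \<le> s \<Longrightarrow> s \<le> w \<Longrightarrow> ((\<lambda>w. b x w $ j) has_real_derivative Dv j x s) (at s)"
      using b_der_v x w assms(2,3) by force
    from MVT2[OF lt this] obtain s where s: "w' < s" "s < w" "b x w $ j - b x w' $ j = (w - w') * Dv j x s"
      by blast
    have "\<bar>Dv j x s\<bar> \<le> B" using B(2)[of "(x, s)" j] x s w by auto
    then show ?thesis using s lt by (simp add: abs_mult mult.commute mult_right_mono)
  qed
  show ?thesis
  proof (intro exI[of _ B] conjI ballI allI B(1))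
    fix x w w' j assume "x \<in> Kx" "w \<in> {m1..m2}" "w' \<in> {m1..m2}"
    then show "\<bar>b x w $ j - b x w' $ j\<bar> \<le> B * \<bar>w - w'\<bar>"
      using main[of x w w' j] main[of x w' w j] by (cases "w' < w"; cases "w < w'") (auto simp: abs_minus_commute)
  qed
qed

end

lemma finite_min_delta:
  fixes P :: "'a \<Rightarrow> real \<Rightarrow> bool"
  assumes "finite I" "\<And>j. j \<in> I \<Longrightarrow> \<exists>d>0. P j d"
    and mono: "\<And>j d d'. P j d \<Longrightarrow> 0 < d' \<Longrightarrow> d' \<le> d \<Longrightarrow> P j d'"
  shows "\<exists>d>0. \<forall>j\<in>I. P j d"
  using assms(1,2)
proof (induction I rule: finite_induct)
  case empty then show ?case by (intro exI[of _ 1]) auto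
next
  case (insert x I)
  then obtain d1 where d1: "d1 > 0" "\<forall>j\<in>I. P j d1" by auto
  obtain d2 where d2: "d2 > 0" "P x d2" using insert(4) by auto
  show ?case using d1 d2 mono by (intro exI[of _ "min d1 d2"]) auto
qed

lemma deriv_from_eps:
  fixes g :: "real \<Rightarrow> real"
  assumes "\<And>\<epsilon>. \<epsilon> > 0 \<Longrightarrow> \<exists>\<delta>>0. \<forall>h. \<bar>h\<bar> < \<delta> \<longrightarrow> \<bar>g h - g 0 - h * D\<bar> \<le> \<epsilon> * \<bar>h\<bar>"
  shows "(g has_real_derivative D) (at 0)"
proof -
  have "(g has_derivative (\<lambda>h. h * D)) (at 0)"
    unfolding has_derivative_at_alt
  proof (intro conjI allI impI bounded_linear_mult_left)
    fix e :: real assume "e > 0"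
    from assms[OF this] show "\<exists>d>0. \<forall>y. norm (y - 0) < d \<longrightarrow> norm (g y - g 0 - (y - 0) * D) \<le> e * norm (y - 0)"
      by simp
  qed
  then show ?thesis by (simp add: has_field_derivative_def mult.commute[of _ D])
qed

lemma sum_abs_comp_le: "(\<Sum>j\<in>UNIV. \<bar>(y::real^'n) $ j\<bar>) \<le> real CARD('n) * norm y"
proof -
  have "(\<Sum>j\<in>UNIV. \<bar>y $ j\<bar>) \<le> (\<Sum>j\<in>(UNIV::'n set). norm y)"
    by (rule sum_mono) (simp add: component_le_norm_cart)
  then show ?thesis by simp
qed

lemma sum_bound_mult:
  fixes a y :: "'n::finite \<Rightarrow> real"
  assumes "\<And>j. \<bar>a j\<bar> \<le> B"
  shows "\<bar>\<Sum>j\<in>UNIV. a j * y j\<bar> \<le> B * (\<Sum>j\<in>UNIV. \<bar>y j\<bar>)"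
proof -
  have "\<bar>\<Sum>j\<in>UNIV. a j * y j\<bar> \<le> (\<Sum>j\<in>UNIV. \<bar>a j * y j\<bar>)" by (rule sum_abs)
  also have "\<dots> \<le> (\<Sum>j\<in>UNIV. B * \<bar>y j\<bar>)"
    by (rule sum_mono) (simp add: abs_mult mult_right_mono assms)
  finally show ?thesis by (simp add: sum_distrib_left)
qed

locale ray = pfaff U b for U :: "(real^'n) set" and b +
  fixes K c \<rho> m1 m2 v and \<phi> :: "real \<Rightarrow> real^'n \<Rightarrow> real"
  assumes K_compact: "compact K" and K_sub: "K \<subseteq> U" and cK: "cball c \<rho> \<subseteq> K" and rho: "\<rho> > 0"
    and m1: "0 < m1" and m12: "m1 \<le> m2"
    and init: "\<And>y. y \<in> ball 0 \<rho> \<Longrightarrow> \<phi> 0 y = v"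
    and pc: "\<And>y. y \<in> ball 0 \<rho> \<Longrightarrow> continuous_on {0..1} (\<lambda>t. \<phi> t y)"
    and pd: "\<And>y t. y \<in> ball 0 \<rho> \<Longrightarrow> 0 < t \<Longrightarrow> t \<le> 1 \<Longrightarrow>
       ((\<lambda>t. \<phi> t y) has_real_derivative (\<Sum>j\<in>UNIV. bcomp b j (c + t *\<^sub>R y, \<phi> t y) * y $ j)) (at t)"
    and pr: "\<And>y t. y \<in> ball 0 \<rho> \<Longrightarrow> 0 \<le> t \<Longrightarrow> t \<le> 1 \<Longrightarrow> \<phi> t y \<in> {m1..m2}"
begin

definition "Q = K \<times> {m1..m2}"
definition "nn = real CARD('n)"

lemma Q_compact: "compact Q" unfolding Q_def by (intro compact_Times K_compact compact_Icc)
lemma Q_sub: "Q \<subseteq> Om" unfolding Q_def Om_def using K_sub m1 by auto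
lemma nn1: "nn \<ge> 1" unfolding nn_def by (simp add: Suc_leI)

lemma ray_in_K: "y \<in> ball 0 \<rho> \<Longrightarrow> 0 \<le> t \<Longrightarrow> t \<le> 1 \<Longrightarrow> c + t *\<^sub>R y \<in> K"
proof -
  assume "y \<in> ball 0 \<rho>" "0 \<le> t" "t \<le> 1"
  then have "norm (t *\<^sub>R y) \<le> \<rho>" using mult_mono[of t 1 "norm y" \<rho>] by auto
  then show ?thesis using cK by (auto simp: dist_norm)
qed

lemma inQ: "y \<in> ball 0 \<rho> \<Longrightarrow> 0 \<le> t \<Longrightarrow> t \<le> 1 \<Longrightarrow> w \<in> {m1..m2} \<Longrightarrow> (c + t *\<^sub>R y, w) \<in> Q"
  using ray_in_K unfolding Q_def by auto

lemma ysum: "(y::real^'n) \<in> ball 0 \<rho> \<Longrightarrow> (\<Sum>j\<in>UNIV. \<bar>y $ j\<bar>) \<le> nn * \<rho>"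
proof -
  assume "y \<in> ball 0 \<rho>"
  then have "norm y \<le> \<rho>" by simp
  then have "real CARD('n) * norm y \<le> real CARD('n) * \<rho>" by (intro mult_left_mono) auto
  then show ?thesis using sum_abs_comp_le[of y] unfolding nn_def by linarith
qed

lemma b_unif_all:
  assumes "\<epsilon> > 0"
  shows "\<exists>d>0. \<forall>j. \<forall>z\<in>Q. \<forall>z'\<in>Q. dist z' z < d \<longrightarrow> \<bar>bcomp b j z' - bcomp b j z\<bar> < \<epsilon>"
proof -
  have "\<exists>d>0. \<forall>j\<in>UNIV. \<forall>z\<in>Q. \<forall>z'\<in>Q. dist z' z < d \<longrightarrow> \<bar>bcomp b j z' - bcomp b j z\<bar> < \<epsilon>"
  proof (rule finite_min_delta)
    fix j :: 'n
    have "uniformly_continuous_on Q (bcomp b j)"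
      by (rule compact_uniformly_continuous[OF continuous_on_subset[OF b_cont Q_sub] Q_compact])
    then show "\<exists>d>0. \<forall>z\<in>Q. \<forall>z'\<in>Q. dist z' z < d \<longrightarrow> \<bar>bcomp b j z' - bcomp b j z\<bar> < \<epsilon>"
      unfolding uniformly_continuous_on_def dist_real_def using assms by blast
  qed auto
  then show ?thesis by auto
qed

lemma b_taylor_all:
  assumes "\<epsilon> > 0"
  shows "\<exists>d>0. \<forall>j. \<forall>z\<in>Q. \<forall>h. norm h < d \<longrightarrow> \<bar>bcomp b j (z + h) - bcomp b j z - Db j z h\<bar> \<le> \<epsilon> * norm h"
proof -
  have "\<exists>d>0. \<forall>j\<in>UNIV. \<forall>z\<in>Q. \<forall>h. norm h < d \<longrightarrow> \<bar>bcomp b j (z + h) - bcomp b j z - Db j z h\<bar> \<le> \<epsilon> * norm h"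
    by (rule finite_min_delta) (use b_unif[OF Q_compact Q_sub assms] in auto)
  then show ?thesis by auto
qed

lemma phi_cont:
  fixes y :: "real^'n"
  assumes y: "y \<in> ball 0 \<rho>" and eta: "\<eta> > 0"
  shows "\<exists>d>0. \<forall>y'\<in>ball 0 \<rho>. norm (y' - y) < d \<longrightarrow> (\<forall>t\<in>{0..1}. \<bar>\<phi> t y' - \<phi> t y\<bar> \<le> \<eta>)"
proof -
  obtain Bb where Bb: "Bb \<ge> 0" "\<And>z j. z \<in> Q \<Longrightarrow> \<bar>bcomp b j z\<bar> \<le> Bb"
    using b_bound[OF Q_compact Q_sub] by blast
  obtain Lv where Lv: "Lv \<ge> 0" "\<And>x w w' j. x \<in> K \<Longrightarrow> w \<in> {m1..m2} \<Longrightarrow> w' \<in> {m1..m2} \<Longrightarrow>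
      \<bar>b x w $ j - b x w' $ j\<bar> \<le> Lv * \<bar>w - w'\<bar>"
    using b_lip_v[OF K_compact K_sub m1, of m2] by blast
  define L where "L = nn * \<rho> * Lv + 1"
  have L: "L > 0" unfolding L_def using nn1 rho Lv(1) by (simp add: add_nonneg_pos)
  define E where "E = exp (2 * L) / L"
  have E: "E > 0" unfolding E_def using L by simp
  define \<epsilon> where "\<epsilon> = \<eta> / (2 * E * nn * \<rho>)"
  have \<epsilon>: "\<epsilon> > 0" unfolding \<epsilon>_def using eta E nn1 rho by simp
  obtain dU where dU: "dU > 0" "\<And>j z z'. z \<in> Q \<Longrightarrow> z' \<in> Q \<Longrightarrow> dist z' z < dU \<Longrightarrow> \<bar>bcomp b j z' - bcomp b j z\<bar> < \<epsilon>"
    using b_unif_all[OF \<epsilon>] by blast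
  define d where "d = min dU (\<eta> / (2 * E * nn * (Bb + 1)))"
  have d: "d > 0" unfolding d_def using dU eta E nn1 Bb by simp
  show ?thesis
  proof (intro exI[of _ d] conjI d ballI impI)
    fix y' :: "real^'n" and t :: real assume y': "y' \<in> ball 0 \<rho>" and yy: "norm (y' - y) < d" and t: "t \<in> {0..1}"
    define \<psi> where "\<psi> = (\<lambda>t. \<phi> t y' - \<phi> t y)"
    define \<psi>' where "\<psi>' = (\<lambda>t. (\<Sum>j\<in>UNIV. bcomp b j (c + t *\<^sub>R y', \<phi> t y') * y' $ j) -
                              (\<Sum>j\<in>UNIV. bcomp b j (c + t *\<^sub>R y, \<phi> t y) * y $ j))"
    define K0 where "K0 = nn * \<rho> * \<epsilon> + nn * Bb * norm (y' - y)"
    have "\<bar>\<psi> t\<bar> \<le> K0 / L * exp (2 * L)"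
    proof (rule gronwall[OF L, where \<psi>=\<psi> and \<psi>'=\<psi>' and t=t and K=K0])
      show "K0 \<ge> 0" unfolding K0_def using nn1 rho \<epsilon> Bb by simp
      show "continuous_on {0..1} \<psi>" unfolding \<psi>_def by (intro continuous_intros pc y y')
      show "\<psi> 0 = 0" unfolding \<psi>_def using init y y' by simp
      show "(\<psi> has_real_derivative \<psi>' s) (at s)" if "0 < s" "s \<le> 1" for s
        unfolding \<psi>_def \<psi>'_def by (intro DERIV_diff pd y y' that)
      show "\<bar>\<psi>' s\<bar> \<le> L * \<bar>\<psi> s\<bar> + K0" if s: "0 < s" "s \<le> 1" for s
      proof -
        define z' where "z' = (c + s *\<^sub>R y', \<phi> s y')"
        define z'' where "z'' = (c + s *\<^sub>R y', \<phi> s y)"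
        define z where "z = (c + s *\<^sub>R y, \<phi> s y)"
        have zQ: "z' \<in> Q" "z'' \<in> Q" "z \<in> Q" unfolding z'_def z''_def z_def
          using inQ pr y y' s by auto
        have e: "\<psi>' s = (\<Sum>j\<in>UNIV. (bcomp b j z' - bcomp b j z'') * y' $ j)
               + (\<Sum>j\<in>UNIV. (bcomp b j z'' - bcomp b j z) * y' $ j)
               + (\<Sum>j\<in>UNIV. bcomp b j z * (y' $ j - y $ j))"
          unfolding \<psi>'_def z'_def z''_def z_def
          by (simp add: sum_subtractf[symmetric] sum.distrib[symmetric] algebra_simps)
        have t1: "\<bar>\<Sum>j\<in>UNIV. (bcomp b j z' - bcomp b j z'') * y' $ j\<bar> \<le> (Lv * \<bar>\<psi> s\<bar>) * (nn * \<rho>)"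
        proof -
          have "\<bar>bcomp b j z' - bcomp b j z''\<bar> \<le> Lv * \<bar>\<psi> s\<bar>" for j
            unfolding z'_def z''_def \<psi>_def bcomp_eq
            by (rule Lv(2)) (use ray_in_K y' pr y s in auto)
          then have "\<bar>\<Sum>j\<in>UNIV. (bcomp b j z' - bcomp b j z'') * y' $ j\<bar> \<le> (Lv * \<bar>\<psi> s\<bar>) * (\<Sum>j\<in>UNIV. \<bar>y' $ j\<bar>)"
            by (rule sum_bound_mult)
          also have "\<dots> \<le> (Lv * \<bar>\<psi> s\<bar>) * (nn * \<rho>)"
            using ysum[OF y'] Lv(1) by (intro mult_left_mono) auto
          finally show ?thesis .
        qed
        have t2: "\<bar>\<Sum>j\<in>UNIV. (bcomp b j z'' - bcomp b j z) * y' $ j\<bar> \<le> \<epsilon> * (nn * \<rho>)"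
        proof -
          have "dist z'' z < dU"
          proof -
            have "dist z'' z = norm (s *\<^sub>R (y' - y))"
              unfolding z''_def z_def by (simp add: dist_Pair_Pair dist_norm algebra_simps)
            also have "\<dots> \<le> norm (y' - y)" using s mult_left_le_one_le[of "norm (y' - y)" s] by simp
            also have "\<dots> < dU" using yy unfolding d_def by simp
            finally show ?thesis .
          qed
          then have "\<bar>bcomp b j z'' - bcomp b j z\<bar> \<le> \<epsilon>" for j using dU(2)[OF zQ(3,2)] by (simp add: less_imp_le)
          then have "\<bar>\<Sum>j\<in>UNIV. (bcomp b j z'' - bcomp b j z) * y' $ j\<bar> \<le> \<epsilon> * (\<Sum>j\<in>UNIV. \<bar>y' $ j\<bar>)"
            by (rule sum_bound_mult)
          also have "\<dots> \<le> \<epsilon> * (nn * \<rho>)" using ysum[OF y'] \<epsilon> by (intro mult_left_mono) auto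
          finally show ?thesis .
        qed
        have t3: "\<bar>\<Sum>j\<in>UNIV. bcomp b j z * (y' $ j - y $ j)\<bar> \<le> Bb * (nn * norm (y' - y))"
        proof -
          have "\<bar>\<Sum>j\<in>UNIV. bcomp b j z * (y' $ j - y $ j)\<bar> \<le> Bb * (\<Sum>j\<in>UNIV. \<bar>y' $ j - y $ j\<bar>)"
            by (rule sum_bound_mult) (use Bb zQ in auto)
          also have "\<dots> \<le> Bb * (nn * norm (y' - y))"
            using sum_abs_comp_le[of "y' - y"] Bb(1) unfolding nn_def by (intro mult_left_mono) auto
          finally show ?thesis .
        qed
        have "\<bar>\<psi>' s\<bar> \<le> (Lv * \<bar>\<psi> s\<bar>) * (nn * \<rho>) + \<epsilon> * (nn * \<rho>) + Bb * (nn * norm (y' - y))"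
          using e t1 t2 t3 by linarith
        also have "\<dots> \<le> L * \<bar>\<psi> s\<bar> + K0" unfolding L_def K0_def by (simp add: algebra_simps)
        finally show ?thesis .
      qed
    qed (use t in auto)
    also have "\<dots> = E * K0" unfolding E_def by simp
    also have "\<dots> \<le> \<eta>"
    proof -
      have "E * (nn * \<rho> * \<epsilon>) = \<eta> / 2" unfolding \<epsilon>_def using E nn1 rho by (simp add: field_simps)
      moreover have "E * (nn * Bb * norm (y' - y)) \<le> \<eta> / 2"
      proof -
        have "norm (y' - y) \<le> \<eta> / (2 * E * nn * (Bb + 1))" using yy unfolding d_def by simp
        then have "E * (nn * (Bb + 1) * norm (y' - y)) \<le> E * (nn * (Bb + 1) * (\<eta> / (2 * E * nn * (Bb + 1))))"
          using E nn1 Bb by (intro mult_left_mono) auto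
        also have "\<dots> = \<eta> / 2"
        proof -
          have "E * nn * (Bb + 1) \<noteq> 0" using E nn1 Bb by simp
          then show ?thesis by (simp add: field_simps)
        qed
        finally have "E * (nn * (Bb + 1) * norm (y' - y)) \<le> \<eta> / 2" .
        moreover have "E * (nn * Bb * norm (y' - y)) \<le> E * (nn * (Bb + 1) * norm (y' - y))"
          using E nn1 by (intro mult_left_mono) (auto simp: distrib_right)
        ultimately show ?thesis by linarith
      qed
      ultimately show ?thesis unfolding K0_def by (simp add: algebra_simps)
    qed
    finally show "\<bar>\<phi> t y' - \<phi> t y\<bar> \<le> \<eta>" unfolding \<psi>_def .
  qed
qed

end

context ray begin

lemma phi_partial:
  fixes y :: "real^'n"
  assumes y: "y \<in> ball 0 \<rho>"
  shows "((\<lambda>h. \<phi> 1 (y + h *\<^sub>R axis i 1)) has_real_derivative bcomp b i (c + y, \<phi> 1 y)) (at 0)"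
proof (rule deriv_from_eps)
  fix \<epsilon>0 :: real assume \<epsilon>0: "\<epsilon>0 > 0"
  obtain Bb where Bb: "Bb \<ge> 0" "\<And>z j. z \<in> Q \<Longrightarrow> \<bar>bcomp b j z\<bar> \<le> Bb"
    using b_bound[OF Q_compact Q_sub] by blast
  obtain BD where BD: "BD \<ge> 0" "\<And>z j k. z \<in> Q \<Longrightarrow> \<bar>Dx j k (fst z) (snd z)\<bar> \<le> BD \<and> \<bar>Dv j (fst z) (snd z)\<bar> \<le> BD"
    using D_bound[OF Q_compact Q_sub] by blast
  define L1 where "L1 = nn * \<rho> * (BD + 1) + 1"
  have L1: "L1 > 0" unfolding L1_def using nn1 rho BD(1) by (simp add: add_nonneg_pos)
  define M where "M = nn * \<rho> * (1 + Bb) + 1"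
  have M: "M > 0" unfolding M_def using nn1 rho Bb(1) by (simp add: add_nonneg_pos)
  define Cc where "Cc = M * exp (2 * L1) / L1"
  have Cc: "Cc > 0" unfolding Cc_def using M L1 by simp
  define \<epsilon> where "\<epsilon> = min 1 (\<epsilon>0 / Cc)"
  have \<epsilon>: "\<epsilon> > 0" "\<epsilon> \<le> 1" "\<epsilon> * Cc \<le> \<epsilon>0" unfolding \<epsilon>_def using \<epsilon>0 Cc
    by (auto simp: min_def field_simps)
  obtain dT where dT: "dT > 0" "\<And>j z h. z \<in> Q \<Longrightarrow> norm h < dT \<Longrightarrow>
      \<bar>bcomp b j (z + h) - bcomp b j z - Db j z h\<bar> \<le> \<epsilon> * norm h"
    using b_taylor_all[OF \<epsilon>(1)] by blast
  obtain dU where dU: "dU > 0" "\<And>j z z'. z \<in> Q \<Longrightarrow> z' \<in> Q \<Longrightarrow> dist z' z < dU \<Longrightarrow>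
      \<bar>bcomp b j z' - bcomp b j z\<bar> < \<epsilon>"
    using b_unif_all[OF \<epsilon>(1)] by blast
  define \<eta> where "\<eta> = min dT dU / 4"
  have \<eta>: "\<eta> > 0" unfolding \<eta>_def using dT dU by simp
  obtain dC where dC: "dC > 0" "\<And>y'. y' \<in> ball 0 \<rho> \<Longrightarrow> norm (y' - y) < dC \<Longrightarrow>
      (\<forall>t\<in>{0..1}. \<bar>\<phi> t y' - \<phi> t y\<bar> \<le> \<eta>)"
    using phi_cont[OF y \<eta>] by blast
  define \<delta> where "\<delta> = min (min dC \<eta>) (\<rho> - norm y)"
  have \<delta>: "\<delta> > 0" unfolding \<delta>_def using dC \<eta> y by simp
  show "\<exists>\<delta>>0. \<forall>h. \<bar>h\<bar> < \<delta> \<longrightarrow>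
     \<bar>\<phi> 1 (y + h *\<^sub>R axis i 1) - \<phi> 1 (y + 0 *\<^sub>R axis i 1) - h * bcomp b i (c + y, \<phi> 1 y)\<bar> \<le> \<epsilon>0 * \<bar>h\<bar>"
  proof (intro exI[of _ \<delta>] conjI \<delta> allI impI)
    fix h :: real assume h: "\<bar>h\<bar> < \<delta>"
    define e :: "real^'n" where "e = axis i 1"
    define y' where "y' = y + h *\<^sub>R e"
    have ne1: "norm e = 1" unfolding e_def by simp
    have ne: "norm (h *\<^sub>R e) = \<bar>h\<bar>" using ne1 by simp
    have y': "y' \<in> ball 0 \<rho>"
    proof -
      have "norm y' \<le> norm y + \<bar>h\<bar>" unfolding y'_def using norm_triangle_ineq[of y "h *\<^sub>R e"] ne by linarith
      also have "\<dots> < \<rho>" using h unfolding \<delta>_def by simp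
      finally show ?thesis by simp
    qed
    have close: "\<bar>\<phi> t y' - \<phi> t y\<bar> \<le> \<eta>" if "t \<in> {0..1}" for t
      using dC(2)[OF y'] that h ne1 unfolding y'_def \<delta>_def by simp
    define \<psi> where "\<psi> = (\<lambda>t. \<phi> t y' - \<phi> t y - h * t * bcomp b i (c + t *\<^sub>R y, \<phi> t y))"
    define d1 where "d1 = (\<lambda>t. \<Sum>j\<in>UNIV. bcomp b j (c + t *\<^sub>R y', \<phi> t y') * y' $ j)"
    define d2 where "d2 = (\<lambda>t. \<Sum>j\<in>UNIV. bcomp b j (c + t *\<^sub>R y, \<phi> t y) * y $ j)"
    define \<gamma> where "\<gamma> = (\<lambda>t. (c + t *\<^sub>R y, \<phi> t y))"
    define \<psi>' where "\<psi>' = (\<lambda>t. d1 t - d2 t - h * (bcomp b i (\<gamma> t) + t * Db i (\<gamma> t) (y, d2 t)))"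
    have \<gamma>Q: "\<gamma> t \<in> Q" if "0 \<le> t" "t \<le> 1" for t unfolding \<gamma>_def using inQ[OF y that] pr[OF y that] .
    have cbi: "continuous_on {0..1} (\<lambda>t. bcomp b i (\<gamma> t))"
    proof -
      have "continuous_on {0..1} \<gamma>" unfolding \<gamma>_def by (intro continuous_intros pc y)
      then show ?thesis
        by (rule continuous_on_compose2[OF continuous_on_subset[OF b_cont Q_sub]]) (use \<gamma>Q in auto)
    qed
    define K0 where "K0 = \<epsilon> * \<bar>h\<bar> * M"
    have gr: "\<bar>\<psi> 1\<bar> \<le> K0 / L1 * exp (2 * L1)"
    proof (rule gronwall[OF L1, where \<psi>=\<psi> and \<psi>'=\<psi>' and t=1 and K=K0])
      show "K0 \<ge> 0" unfolding K0_def using \<epsilon> M by simp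
      show "continuous_on {0..1} \<psi>" unfolding \<psi>_def
        using cbi unfolding \<gamma>_def by (intro continuous_intros pc y y') auto
      show "\<psi> 0 = 0" unfolding \<psi>_def using init y y' by simp
      show "(\<psi> has_real_derivative \<psi>' s) (at s)" if s: "0 < s" "s \<le> 1" for s
      proof -
        have gd: "(\<gamma> has_vector_derivative (y, d2 s)) (at s)"
          unfolding \<gamma>_def
          using pd[OF y s] unfolding d2_def
          by (auto intro!: derivative_eq_intros simp: has_real_derivative_iff_has_vector_derivative)
        have bd: "((\<lambda>t. bcomp b i (\<gamma> t)) has_real_derivative Db i (\<gamma> s) (y, d2 s)) (at s)"
          by (rule b_chain[OF gd]) (use \<gamma>Q[of s] Q_sub s in auto)
        have m: "((\<lambda>t. h * (t * bcomp b i (\<gamma> t))) has_real_derivative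
            h * (bcomp b i (\<gamma> s) + s * Db i (\<gamma> s) (y, d2 s))) (at s)"
          using DERIV_cmult[OF DERIV_mult[OF DERIV_ident bd], of h] by (simp add: mult.commute)
        have "((\<lambda>t. \<phi> t y' - \<phi> t y - h * (t * bcomp b i (\<gamma> t))) has_real_derivative
            d1 s - d2 s - h * (bcomp b i (\<gamma> s) + s * Db i (\<gamma> s) (y, d2 s))) (at s)"
        proof -
          have p1: "((\<lambda>t. \<phi> t y') has_real_derivative d1 s) (at s)" unfolding d1_def by (rule pd[OF y' s])
          have p2: "((\<lambda>t. \<phi> t y) has_real_derivative d2 s) (at s)" unfolding d2_def by (rule pd[OF y s])
          show ?thesis by (rule DERIV_diff[OF DERIV_diff[OF p1 p2] m])
        qed
        then show ?thesis unfolding \<psi>_def \<psi>'_def \<gamma>_def by (simp add: mult.assoc)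
      qed
      show "\<bar>\<psi>' s\<bar> \<le> L1 * \<bar>\<psi> s\<bar> + K0" if s: "0 < s" "s \<le> 1" for s
      proof -
        have s01: "0 \<le> s" "s \<le> 1" using s by auto
        define z where "z = \<gamma> s"
        define \<delta>\<phi> where "\<delta>\<phi> = \<phi> s y' - \<phi> s y"
        define \<Delta> where "\<Delta> = ((s * h) *\<^sub>R e, \<delta>\<phi>)"
        have zQ: "z \<in> Q" unfolding z_def by (rule \<gamma>Q[OF s01])
        have zD: "z + \<Delta> = (c + s *\<^sub>R y', \<phi> s y')"
          unfolding z_def \<gamma>_def \<Delta>_def \<delta>\<phi>_def y'_def by (simp add: algebra_simps)
        have zDQ: "z + \<Delta> \<in> Q" unfolding zD using inQ[OF y' s01] pr[OF y' s01] .
        have d\<phi>: "\<bar>\<delta>\<phi>\<bar> \<le> \<eta>" unfolding \<delta>\<phi>_def using close s01 by auto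
        define B where "B = (\<lambda>j. bcomp b j z)"
        define B' where "B' = (\<lambda>j. bcomp b j (z + \<Delta>))"
        define X where "X = (\<lambda>j k. Dx j k (fst z) (snd z))"
        define W where "W = (\<lambda>j. Dv j (fst z) (snd z))"
        define R where "R = (\<lambda>j. B' j - B j - (s * h * X j i + \<delta>\<phi> * W j))"
        have hs: "\<bar>s * h\<bar> \<le> \<bar>h\<bar>" using s01 by (simp add: abs_mult mult_left_le_one_le)
        have nD: "norm \<Delta> \<le> \<bar>h\<bar> + \<bar>\<delta>\<phi>\<bar>"
          using norm_Pair_le[of "(s * h) *\<^sub>R e" \<delta>\<phi>] hs unfolding \<Delta>_def e_def by simp
        have nD2: "norm \<Delta> < dT" "norm \<Delta> < dU"
          using nD d\<phi> h unfolding \<delta>_def \<eta>_def by auto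
        have DbD: "Db j z \<Delta> = s * h * X j i + \<delta>\<phi> * W j" for j
        proof -
          have "(\<Sum>k\<in>UNIV. fst \<Delta> $ k * X j k) = (\<Sum>k\<in>UNIV. if k = i then s * h * X j k else 0)"
            by (intro sum.cong) (auto simp: \<Delta>_def e_def axis_def)
          also have "\<dots> = s * h * X j i" by simp
          finally have "(\<Sum>k\<in>UNIV. fst \<Delta> $ k * X j k) = s * h * X j i" .
          then show ?thesis unfolding Db_def X_def W_def by (simp add: \<Delta>_def)
        qed
        have Rb: "\<bar>R j\<bar> \<le> \<epsilon> * norm \<Delta>" for j
          using dT(2)[OF zQ nD2(1), of j] unfolding R_def B_def B'_def DbD .
        have B'B: "\<bar>B' i - B i\<bar> \<le> \<epsilon>"
          using dU(2)[OF zQ zDQ, of i] nD2(2) unfolding B_def B'_def by (simp add: dist_norm less_imp_le)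
        have Bz: "\<bar>B j\<bar> \<le> Bb" for j unfolding B_def using Bb(2)[OF zQ] .
        have Wz: "\<bar>W j\<bar> \<le> BD" for j unfolding W_def using BD(2)[OF zQ] by blast
        have \<psi>s: "\<psi> s = \<delta>\<phi> - h * s * B i" unfolding \<psi>_def \<delta>\<phi>_def B_def z_def \<gamma>_def by simp
        have yj: "y' $ j = y $ j + h * (if j = i then 1 else 0)" for j
          unfolding y'_def e_def by (simp add: axis_def)
        have d1s: "d1 s = (\<Sum>j\<in>UNIV. B' j * y $ j) + h * B' i"
        proof -
          have "d1 s = (\<Sum>j\<in>UNIV. B' j * y' $ j)" unfolding d1_def B'_def zD ..
          also have "\<dots> = (\<Sum>j\<in>UNIV. B' j * y $ j + h * (if j = i then B' j else 0))"
            unfolding yj by (intro sum.cong) (auto simp: algebra_simps)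
          also have "\<dots> = (\<Sum>j\<in>UNIV. B' j * y $ j) + h * B' i"
            by (simp add: sum.distrib sum_distrib_left[symmetric])
          finally show ?thesis .
        qed
        have d2s: "d2 s = (\<Sum>j\<in>UNIV. B j * y $ j)" unfolding d2_def B_def z_def \<gamma>_def ..
        have Dbs: "Db i z (y, d2 s) = (\<Sum>k\<in>UNIV. y $ k * X i k) + d2 s * W i"
          unfolding Db_def X_def W_def by simp
        have RR: "(\<Sum>j\<in>UNIV. R j * y $ j) = (\<Sum>j\<in>UNIV. B' j * y $ j) - (\<Sum>j\<in>UNIV. B j * y $ j)
            - s * h * (\<Sum>j\<in>UNIV. X j i * y $ j) - \<delta>\<phi> * (\<Sum>j\<in>UNIV. W j * y $ j)"
          unfolding R_def by (simp add: algebra_simps sum_subtractf sum.distrib sum_distrib_left)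
        have comp: "(\<Sum>k\<in>UNIV. y $ k * X i k) + (\<Sum>j\<in>UNIV. B j * y $ j) * W i
              = (\<Sum>j\<in>UNIV. X j i * y $ j) + B i * (\<Sum>j\<in>UNIV. W j * y $ j)"
        proof -
          have fz: "fst z \<in> U" "snd z > 0" using zQ Q_sub unfolding Om_def by auto
          have "y $ j * X i j + B j * y $ j * W i = X j i * y $ j + B i * (W j * y $ j)" for j
          proof -
            have "X i j + B j * W i = X j i + B i * W j"
              using b_compat[OF fz, of i j] unfolding X_def W_def B_def Dx_def Dv_def
              by (cases z) (simp add: bcomp_eq)
            then have "y $ j * (X i j + B j * W i) = y $ j * (X j i + B i * W j)" by simp
            then show ?thesis by (simp add: algebra_simps)
          qed
          then have "(\<Sum>j\<in>UNIV. y $ j * X i j + B j * y $ j * W i) = (\<Sum>j\<in>UNIV. X j i * y $ j + B i * (W j * y $ j))"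
            by simp
          then show ?thesis by (simp add: sum.distrib sum_distrib_left sum_distrib_right)
        qed
        have ident: "\<psi>' s = \<psi> s * (\<Sum>j\<in>UNIV. W j * y $ j) + (\<Sum>j\<in>UNIV. R j * y $ j) + h * (B' i - B i)"
        proof -
          have "\<psi>' s = d1 s - d2 s - h * (B i + s * Db i z (y, d2 s))"
            unfolding \<psi>'_def B_def z_def ..
          also have "\<dots> = (\<Sum>j\<in>UNIV. B' j * y $ j) + h * B' i - (\<Sum>j\<in>UNIV. B j * y $ j)
              - h * (B i + s * ((\<Sum>k\<in>UNIV. y $ k * X i k) + (\<Sum>j\<in>UNIV. B j * y $ j) * W i))"
            unfolding Dbs unfolding d1s d2s ..
          also have "\<dots> = (\<Sum>j\<in>UNIV. B' j * y $ j) + h * B' i - (\<Sum>j\<in>UNIV. B j * y $ j)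
              - h * (B i + s * ((\<Sum>j\<in>UNIV. X j i * y $ j) + B i * (\<Sum>j\<in>UNIV. W j * y $ j)))"
            unfolding comp ..
          also have "\<dots> = \<psi> s * (\<Sum>j\<in>UNIV. W j * y $ j) + (\<Sum>j\<in>UNIV. R j * y $ j) + h * (B' i - B i)"
            unfolding RR \<psi>s by (simp add: algebra_simps)
          finally show ?thesis .
        qed
        have yS: "(\<Sum>j\<in>UNIV. \<bar>y $ j\<bar>) \<le> nn * \<rho>" by (rule ysum[OF y])
        have a1: "\<bar>\<Sum>j\<in>UNIV. W j * y $ j\<bar> \<le> BD * (nn * \<rho>)"
          using sum_bound_mult[of W BD "\<lambda>j. y $ j", OF Wz] yS BD(1) by (meson mult_left_mono order_trans)
        have a2: "\<bar>\<Sum>j\<in>UNIV. R j * y $ j\<bar> \<le> (\<epsilon> * norm \<Delta>) * (nn * \<rho>)"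
          using sum_bound_mult[of R "\<epsilon> * norm \<Delta>" "\<lambda>j. y $ j", OF Rb] yS \<epsilon>(1)
          by (meson mult_left_mono order_trans norm_ge_zero mult_nonneg_nonneg less_imp_le)
        have a3: "\<bar>h * (B' i - B i)\<bar> \<le> \<bar>h\<bar> * \<epsilon>" using B'B by (simp add: abs_mult mult_left_mono)
        have nD3: "norm \<Delta> \<le> \<bar>h\<bar> + \<bar>\<psi> s\<bar> + \<bar>h\<bar> * Bb"
        proof -
          have "\<bar>\<delta>\<phi>\<bar> \<le> \<bar>\<psi> s\<bar> + \<bar>h * s * B i\<bar>" using \<psi>s by linarith
          also have "\<bar>h * s * B i\<bar> \<le> \<bar>h\<bar> * Bb"
          proof -
            have "\<bar>h * s * B i\<bar> = \<bar>s * h\<bar> * \<bar>B i\<bar>" by (simp add: abs_mult)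
            also have "\<dots> \<le> \<bar>h\<bar> * Bb" using hs Bz[of i] by (intro mult_mono) auto
            finally show ?thesis .
          qed
          finally show ?thesis using nD by linarith
        qed
        have "\<bar>\<psi>' s\<bar> \<le> \<bar>\<psi> s\<bar> * (BD * (nn * \<rho>)) + (\<epsilon> * norm \<Delta>) * (nn * \<rho>) + \<bar>h\<bar> * \<epsilon>"
        proof -
          have "\<bar>\<psi> s * (\<Sum>j\<in>UNIV. W j * y $ j)\<bar> \<le> \<bar>\<psi> s\<bar> * (BD * (nn * \<rho>))"
            using a1 by (simp add: abs_mult mult_left_mono)
          then show ?thesis unfolding ident using a2 a3 by linarith
        qed
        also have "\<dots> \<le> \<bar>\<psi> s\<bar> * (BD * (nn * \<rho>)) + (\<epsilon> * (\<bar>h\<bar> + \<bar>\<psi> s\<bar> + \<bar>h\<bar> * Bb)) * (nn * \<rho>) + \<bar>h\<bar> * \<epsilon>"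
          using nD3 \<epsilon>(1) nn1 rho by (intro add_mono mult_right_mono mult_left_mono) auto
        also have "\<dots> = \<bar>\<psi> s\<bar> * (nn * \<rho> * (BD + \<epsilon>)) + \<epsilon> * \<bar>h\<bar> * M"
          unfolding M_def by (simp add: algebra_simps)
        also have "\<dots> \<le> \<bar>\<psi> s\<bar> * L1 + \<epsilon> * \<bar>h\<bar> * M"
        proof -
          have "nn * \<rho> * (BD + \<epsilon>) \<le> L1" unfolding L1_def using \<epsilon>(2) nn1 rho
            by (smt (verit, best) mult_left_mono mult_nonneg_nonneg)
          then show ?thesis by (simp add: mult_left_mono)
        qed
        finally show ?thesis unfolding K0_def by (simp add: algebra_simps)
      qed
    qed auto
    have "\<psi> 1 = \<phi> 1 (y + h *\<^sub>R axis i 1) - \<phi> 1 (y + 0 *\<^sub>R axis i 1) - h * bcomp b i (c + y, \<phi> 1 y)"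
      unfolding \<psi>_def y'_def e_def by simp
    moreover have "K0 / L1 * exp (2 * L1) \<le> \<epsilon>0 * \<bar>h\<bar>"
    proof -
      have "K0 / L1 * exp (2 * L1) = (\<epsilon> * Cc) * \<bar>h\<bar>" unfolding K0_def Cc_def by simp
      also have "\<dots> \<le> \<epsilon>0 * \<bar>h\<bar>" using \<epsilon>(3) by (simp add: mult_right_mono)
      finally show ?thesis .
    qed
    ultimately show "\<bar>\<phi> 1 (y + h *\<^sub>R axis i 1) - \<phi> 1 (y + 0 *\<^sub>R axis i 1) - h * bcomp b i (c + y, \<phi> 1 y)\<bar> \<le> \<epsilon>0 * \<bar>h\<bar>"
      using gr by simp
  qed
qed

end

lemma partials_has_derivative:
  fixes F :: "'a::euclidean_space \<Rightarrow> real" and D :: "'a \<Rightarrow> 'a \<Rightarrow> real"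
  assumes S: "open S" and z: "z \<in> S"
   and der: "\<And>u z. u \<in> Basis \<Longrightarrow> z \<in> S \<Longrightarrow> ((\<lambda>t. F (z + t *\<^sub>R u)) has_real_derivative D u z) (at 0)"
   and cont: "\<And>u. u \<in> Basis \<Longrightarrow> continuous_on S (D u)"
  shows "(F has_derivative (\<lambda>h. \<Sum>u\<in>Basis. (h \<bullet> u) * D u z)) (at z)"
proof -
  have bl: "bounded_linear (\<lambda>h. \<Sum>u\<in>Basis. (h \<bullet> u) * D u z)"
    by (intro bounded_linear_sum bounded_linear_mult_const bounded_linear_inner_left)
  show ?thesis unfolding has_derivative_at_alt
  proof (intro conjI bl allI impI)
    fix e :: real assume "e > 0"
    from unif_taylor[OF S _ _ der cont this, of "{z}"] z obtain d where "d > 0"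
      "\<And>h. norm h < d \<Longrightarrow> \<bar>F (z + h) - F z - (\<Sum>u\<in>Basis. (h \<bullet> u) * D u z)\<bar> \<le> e * norm h" by auto
    then show "\<exists>d>0. \<forall>y. norm (y - z) < d \<longrightarrow> norm (F y - F z - (\<Sum>u\<in>Basis. ((y - z) \<bullet> u) * D u z)) \<le> e * norm (y - z)"
      by (metis add.commute diff_add_cancel real_norm_def)
  qed
qed

lemma Fint_diff:
  assumes v0: "v0 > 0" and ab: "0 < a" "a \<le> b"
    and fint: "\<And>x y. 0 < x \<Longrightarrow> x \<le> y \<Longrightarrow> (\<lambda>s. 1 / f s) integrable_on {x..y}"
  shows "Fint f v0 b - Fint f v0 a = integral {a..b} (\<lambda>s. 1 / f s)"
proof -
  define g where "g = (\<lambda>s. 1 / f s)"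
  have comb: "integral {x..y} g + integral {y..z} g = integral {x..z} g" if "0 < x" "x \<le> y" "y \<le> z" for x y z
    using Henstock_Kurzweil_Integration.integral_combine[OF that(2,3) fint[OF that(1), of z]] that
    unfolding g_def by simp
  consider "v0 \<le> a" | "a < v0" "v0 \<le> b" | "b < v0" by linarith
  then show ?thesis
  proof cases
    case 1 then show ?thesis using comb[of v0 a b] v0 ab unfolding Fint_def g_def by auto
  next
    case 2 then show ?thesis using comb[of a v0 b] v0 ab unfolding Fint_def g_def by auto
  next
    case 3 then show ?thesis using comb[of a b v0] v0 ab unfolding Fint_def g_def by auto
  qed
qed

context ray begin

lemma ray_solves: "solves_pfaff b (ball c \<rho>) (\<lambda>x. \<phi> 1 (x - c))"
  unfolding solves_pfaff_def
proof (intro conjI ballI allI)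
  show "continuous_on (ball c \<rho>) (\<lambda>x. \<phi> 1 (x - c))"
    unfolding continuous_on_iff
  proof (intro ballI allI impI)
    fix x and e :: real assume x: "x \<in> ball c \<rho>" and e: "e > 0"
    have y: "x - c \<in> ball 0 \<rho>" using x by (simp add: dist_norm norm_minus_commute)
    obtain d where d: "d > 0" "\<And>y'. y' \<in> ball 0 \<rho> \<Longrightarrow> norm (y' - (x - c)) < d \<Longrightarrow>
        (\<forall>t\<in>{0..1}. \<bar>\<phi> t y' - \<phi> t (x - c)\<bar> \<le> e / 2)"
      using phi_cont[OF y, of "e/2"] e by auto
    show "\<exists>d>0. \<forall>x'\<in>ball c \<rho>. dist x' x < d \<longrightarrow> dist (\<phi> 1 (x' - c)) (\<phi> 1 (x - c)) < e"
    proof (intro exI[of _ d] conjI d(1) ballI impI)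
      fix x' assume x': "x' \<in> ball c \<rho>" and "dist x' x < d"
      then have "norm ((x' - c) - (x - c)) < d" by (simp add: dist_norm)
      moreover have "x' - c \<in> ball 0 \<rho>" using x' by (simp add: dist_norm norm_minus_commute)
      ultimately have "\<bar>\<phi> 1 (x' - c) - \<phi> 1 (x - c)\<bar> \<le> e / 2" using d(2) by auto
      then show "dist (\<phi> 1 (x' - c)) (\<phi> 1 (x - c)) < e" using e by (simp add: dist_real_def)
    qed
  qed
next
  fix x assume x: "x \<in> ball c \<rho>"
  have y: "x - c \<in> ball 0 \<rho>" using x by (simp add: dist_norm norm_minus_commute)
  show "\<phi> 1 (x - c) > 0" using pr[OF y, of 1] m1 by auto
  fix i
  have "((\<lambda>h. \<phi> 1 ((x - c) + h *\<^sub>R axis i 1)) has_real_derivative bcomp b i (c + (x - c), \<phi> 1 (x - c))) (at 0)"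
    by (rule phi_partial[OF y])
  then show "((\<lambda>t. \<phi> 1 (x + t *\<^sub>R axis i 1 - c)) has_real_derivative b x (\<phi> 1 (x - c)) $ i) (at 0)"
    by (simp add: bcomp_eq algebra_simps)
qed

end

locale pfaff_f = pfaff U b for U :: "(real^'n) set" and b +
  fixes f :: "real \<Rightarrow> real" and v0 :: real
  assumes f_pos: "\<And>v. v > 0 \<Longrightarrow> f v > 0"
    and f_int: "\<And>a c. 0 < a \<Longrightarrow> a \<le> c \<Longrightarrow> (\<lambda>s. 1 / f s) integrable_on {a..c}"
    and v0_pos: "v0 > 0"
    and F_top: "filterlim (Fint f v0) at_top at_top"
    and F_bot: "filterlim (Fint f v0) at_bot (at_right 0)"
    and bK: "\<And>K. compact K \<Longrightarrow> K \<subseteq> U \<Longrightarrow> \<exists>A. \<forall>x\<in>K. \<forall>w>0. norm (b x w) \<le> A * f w"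
begin

lemma barrier_levels:
  assumes "v > 0"
  shows "\<exists>m1 m2. 0 < m1 \<and> m1 \<le> v \<and> v \<le> m2 \<and>
    integral {m1..v} (\<lambda>s. 1 / f s) > A \<and> integral {v..m2} (\<lambda>s. 1 / f s) > A"
proof -
  have "\<forall>\<^sub>F w in at_right 0. Fint f v0 w \<le> Fint f v0 v - A - 1"
    using F_bot unfolding filterlim_at_bot by blast
  then obtain d where d: "d > 0" "\<And>w. 0 < w \<Longrightarrow> w < d \<Longrightarrow> Fint f v0 w \<le> Fint f v0 v - A - 1"
    unfolding eventually_at_right_field by auto
  define m1 where "m1 = min (d/2) v"
  have m1: "0 < m1" "m1 \<le> v" "m1 < d" unfolding m1_def using d assms by auto
  have "\<forall>\<^sub>F w in at_top. Fint f v0 w \<ge> Fint f v0 v + A + 1"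
    using F_top unfolding filterlim_at_top by blast
  then obtain N where N: "\<And>w. w \<ge> N \<Longrightarrow> Fint f v0 w \<ge> Fint f v0 v + A + 1"
    unfolding eventually_at_top_linorder by auto
  define m2 where "m2 = max N v"
  have m2: "v \<le> m2" "m2 \<ge> N" unfolding m2_def by auto
  have "integral {m1..v} (\<lambda>s. 1 / f s) = Fint f v0 v - Fint f v0 m1"
    using Fint_diff[OF v0_pos m1(1,2) f_int] by simp
  moreover have "Fint f v0 m1 \<le> Fint f v0 v - A - 1" using d(2) m1 by auto
  moreover have "integral {v..m2} (\<lambda>s. 1 / f s) = Fint f v0 m2 - Fint f v0 v"
    using Fint_diff[OF v0_pos assms m2(1) f_int] by simp
  moreover have "Fint f v0 m2 \<ge> Fint f v0 v + A + 1" using N m2 by auto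
  ultimately show ?thesis using m1 m2 by (intro exI[of _ m1] exI[of _ m2]) auto
qed

end

context pfaff_f begin

lemma ray_ode:
  fixes y :: "real^'n"
  assumes K: "compact K" "K \<subseteq> U" and cK: "cball c \<rho> \<subseteq> K" and rho: "\<rho> > 0"
    and A0: "\<forall>x\<in>K. \<forall>w>0. norm (b x w) \<le> A0 * f w"
    and m: "0 < m1" "m1 \<le> v" "v \<le> m2"
    and I1: "integral {m1..v} (\<lambda>s. 1 / f s) > \<bar>A0\<bar> * \<rho> + 1"
    and I2: "integral {v..m2} (\<lambda>s. 1 / f s) > \<bar>A0\<bar> * \<rho> + 1"
    and y: "y \<in> ball 0 \<rho>"
  shows "\<exists>u. u 0 = v \<and> continuous_on {0..1} u \<and>
     (\<forall>t. 0 < t \<and> t \<le> 1 \<longrightarrow> (u has_real_derivative (\<Sum>j\<in>UNIV. bcomp b j (c + t *\<^sub>R y, u t) * y $ j)) (at t)) \<and>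
     (\<forall>t. 0 \<le> t \<and> t \<le> 1 \<longrightarrow> u t \<in> {m1..m2})"
proof -
  define A where "A = \<bar>A0\<bar> * \<rho> + 1"
  have A: "A > 0" unfolding A_def using rho by (simp add: add_nonneg_pos)
  define Q where "Q = K \<times> {m1..m2}"
  have Qc: "compact Q" unfolding Q_def using K by (intro compact_Times) auto
  have QO: "Q \<subseteq> Om" unfolding Q_def Om_def using K m by auto
  obtain Bb where Bb: "Bb \<ge> 0" "\<And>z j. z \<in> Q \<Longrightarrow> \<bar>bcomp b j z\<bar> \<le> Bb"
    using b_bound[OF Qc QO] by blast
  obtain Lv where Lv: "Lv \<ge> 0" "\<And>x w w' j. x \<in> K \<Longrightarrow> w \<in> {m1..m2} \<Longrightarrow> w' \<in> {m1..m2} \<Longrightarrow>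
      \<bar>b x w $ j - b x w' $ j\<bar> \<le> Lv * \<bar>w - w'\<bar>"
    using b_lip_v[OF K m(1), of m2] by blast
  define ct where "ct = (\<lambda>t::real. max 0 (min 1 t))"
  define cl where "cl = (\<lambda>w::real. max m1 (min m2 w))"
  have ct01: "0 \<le> ct t" "ct t \<le> 1" for t unfolding ct_def by auto
  have clm: "cl w \<in> {m1..m2}" for w unfolding cl_def using m by auto
  have cllip: "\<bar>cl w - cl w'\<bar> \<le> \<bar>w - w'\<bar>" for w w' unfolding cl_def by (auto simp: max_def min_def)
  have ray_K: "c + t *\<^sub>R y \<in> K" if "0 \<le> t" "t \<le> 1" for t
  proof -
    have "norm (t *\<^sub>R y) \<le> \<rho>" using that y mult_mono[of t 1 "norm y" \<rho>] by auto
    then show ?thesis using cK by (auto simp: dist_norm)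
  qed
  have ny: "(\<Sum>j\<in>UNIV. \<bar>y $ j\<bar>) \<le> real CARD('n) * \<rho>"
  proof -
    have "real CARD('n) * norm y \<le> real CARD('n) * \<rho>" using y by (intro mult_left_mono) auto
    then show ?thesis using sum_abs_comp_le[of y] by linarith
  qed
  define NY where "NY = (\<Sum>j\<in>UNIV. \<bar>y $ j\<bar>)"
  have NY0: "NY \<ge> 0" unfolding NY_def by (auto intro: sum_nonneg)
  define G where "G = (\<lambda>t w. \<Sum>j\<in>UNIV. bcomp b j (c + ct t *\<^sub>R y, cl w) * y $ j)"
  have inQ: "(c + ct t *\<^sub>R y, cl w) \<in> Q" for t w unfolding Q_def using ray_K[OF ct01] clm by auto
  have Gc: "continuous_on UNIV (\<lambda>p. G (fst p) (snd p))"
  proof -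
    have mc: "continuous_on UNIV (\<lambda>p::real\<times>real. (c + ct (fst p) *\<^sub>R y, cl (snd p)))"
      unfolding ct_def cl_def by (intro continuous_intros)
    have "continuous_on UNIV (\<lambda>p::real\<times>real. bcomp b j (c + ct (fst p) *\<^sub>R y, cl (snd p)))" for j
      by (rule continuous_on_compose2[OF continuous_on_subset[OF b_cont QO] mc]) (use inQ in auto)
    then show ?thesis unfolding G_def by (intro continuous_intros) auto
  qed
  have Glip: "\<bar>G t w - G t w'\<bar> \<le> (Lv * NY) * \<bar>w - w'\<bar>" for t w w'
  proof -
    have "G t w - G t w' = (\<Sum>j\<in>UNIV. (bcomp b j (c + ct t *\<^sub>R y, cl w) - bcomp b j (c + ct t *\<^sub>R y, cl w')) * y $ j)"
      unfolding G_def by (simp add: sum_subtractf[symmetric] algebra_simps)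
    also have "\<bar>\<dots>\<bar> \<le> (Lv * \<bar>w - w'\<bar>) * NY" unfolding NY_def
    proof (rule sum_bound_mult)
      fix j
      have "\<bar>bcomp b j (c + ct t *\<^sub>R y, cl w) - bcomp b j (c + ct t *\<^sub>R y, cl w')\<bar> \<le> Lv * \<bar>cl w - cl w'\<bar>"
        unfolding bcomp_eq by (rule Lv(2)) (use ray_K[OF ct01] clm in auto)
      also have "\<dots> \<le> Lv * \<bar>w - w'\<bar>" using cllip Lv(1) by (simp add: mult_left_mono)
      finally show "\<bar>bcomp b j (c + ct t *\<^sub>R y, cl w) - bcomp b j (c + ct t *\<^sub>R y, cl w')\<bar> \<le> Lv * \<bar>w - w'\<bar>" .
    qed
    finally show ?thesis by (simp add: algebra_simps)
  qed
  have Gb: "\<bar>G t w\<bar> \<le> Bb * NY" for t w unfolding G_def NY_def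
    by (rule sum_bound_mult) (use Bb inQ in auto)
  obtain u where u0: "u 0 = v" and uc2: "continuous_on {0..2} u"
    and ud: "\<And>t. 0 < t \<Longrightarrow> t < 2 \<Longrightarrow> (u has_real_derivative G t (u t)) (at t)"
    using ode_exists[OF Gc Glip _ Gb, of v] Lv(1) NY0 by auto
  have uc: "continuous_on {0..1} u" by (rule continuous_on_subset[OF uc2]) auto
  define h where "h = (\<lambda>w. SUP t\<in>{0..1}. \<bar>G t w\<bar>)"
  have bdd: "bdd_above ((\<lambda>t. \<bar>G t w\<bar>) ` {0..1})" for w
    using Gb by (intro bdd_aboveI[of _ "Bb * NY"]) auto
  have hup: "\<bar>G t w\<bar> \<le> h w" if "t \<in> {0..1}" for t w unfolding h_def by (rule cSUP_upper[OF that bdd])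
  have hlip: "h w \<le> h w' + (Lv * NY) * \<bar>w - w'\<bar>" for w w'
    unfolding h_def
  proof (rule cSUP_least)
    fix t :: real assume t: "t \<in> {0..1}"
    have "\<bar>G t w\<bar> \<le> \<bar>G t w'\<bar> + (Lv * NY) * \<bar>w - w'\<bar>" using Glip[of t w w'] by linarith
    also have "\<dots> \<le> (SUP t\<in>{0..1}. \<bar>G t w'\<bar>) + (Lv * NY) * \<bar>w - w'\<bar>"
      using hup[OF t, of w'] unfolding h_def by simp
    finally show "\<bar>G t w\<bar> \<le> (SUP t\<in>{0..1}. \<bar>G t w'\<bar>) + (Lv * NY) * \<bar>w - w'\<bar>" .
  qed auto
  have hc: "continuous_on UNIV h"
    unfolding continuous_on_iff
  proof (intro ballI allI impI)
    fix w and e :: real assume "e > 0"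
    show "\<exists>d>0. \<forall>w'\<in>UNIV. dist w' w < d \<longrightarrow> dist (h w') (h w) < e"
    proof (intro exI[of _ "e / (Lv * NY + 1)"] conjI ballI impI)
      show "e / (Lv * NY + 1) > 0" using \<open>e > 0\<close> Lv(1) NY0 by (simp add: add_nonneg_pos)
      fix w' assume "dist w' w < e / (Lv * NY + 1)"
      moreover have "Lv * NY + 1 > 0" using Lv(1) NY0 by (simp add: add_nonneg_pos)
      ultimately have d: "\<bar>w' - w\<bar> * (Lv * NY + 1) < e"
        by (simp add: dist_real_def pos_less_divide_eq)
      have "\<bar>h w' - h w\<bar> \<le> (Lv * NY) * \<bar>w' - w\<bar>" using hlip[of w w'] hlip[of w' w] by (simp add: abs_minus_commute)
      also have "\<dots> \<le> \<bar>w' - w\<bar> * (Lv * NY + 1)" by (simp add: algebra_simps)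
      finally show "dist (h w') (h w) < e" using d by (simp add: dist_real_def)
    qed
  qed
  have h0: "h w \<ge> 0" for w using hup[of 0 w] by simp
  have hf: "h w \<le> A * f w" if w: "m1 \<le> w" "w \<le> m2" for w
    unfolding h_def
  proof (rule cSUP_least)
    fix t :: real assume t: "t \<in> {0..1}"
    have ctt: "ct t = t" unfolding ct_def using t by auto
    have clw: "cl w = w" unfolding cl_def using w by auto
    have "G t w = b (c + t *\<^sub>R y) w \<bullet> y" unfolding G_def ctt clw
      by (simp add: inner_vec_def bcomp_eq)
    then have "\<bar>G t w\<bar> \<le> norm (b (c + t *\<^sub>R y) w) * norm y" by (simp add: Cauchy_Schwarz_ineq2)
    also have "\<dots> \<le> (A0 * f w) * \<rho>"
    proof (rule mult_mono)
      show "norm (b (c + t *\<^sub>R y) w) \<le> A0 * f w" using A0 ray_K[of t] t w m by auto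
      show "norm y \<le> \<rho>" using y by simp
      show "0 \<le> A0 * f w" using A0 ray_K[of t] t w m by (meson norm_ge_zero order_trans less_le_trans atLeastAtMost_iff)
    qed simp
    also have "\<dots> \<le> A * f w"
    proof -
      have fw: "f w > 0" using f_pos w m by auto
      have "(A0 * f w) * \<rho> \<le> (\<bar>A0\<bar> * \<rho>) * f w" using fw rho
        by (simp add: mult.commute mult.left_commute mult_left_mono)
      also have "\<dots> \<le> A * f w" unfolding A_def using fw by simp
      finally show ?thesis .
    qed
    finally show "\<bar>G t w\<bar> \<le> A * f w" .
  qed auto
  have ubar: "m1 < u t \<and> u t < m2" if t: "0 \<le> t" "t \<le> 1" for t
  proof (rule barrier[OF uc _ _ hc h0 hf f_pos f_int[OF m(1), of m2] A m(1)])
    show "\<And>s. 0 < s \<Longrightarrow> s < 1 \<Longrightarrow> (u has_real_derivative G s (u s)) (at s)" using ud by auto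
    show "\<And>s. 0 < s \<Longrightarrow> s < 1 \<Longrightarrow> \<bar>G s (u s)\<bar> \<le> h (u s)" using hup by auto
  qed (use m u0 I1 I2 t A_def in auto)
  show ?thesis
  proof (intro exI[of _ u] conjI allI impI u0 uc)
    fix t :: real assume t: "0 < t \<and> t \<le> 1"
    have "G t (u t) = (\<Sum>j\<in>UNIV. bcomp b j (c + t *\<^sub>R y, u t) * y $ j)"
      using ubar[of t] t unfolding G_def ct_def cl_def by auto
    then show "(u has_real_derivative (\<Sum>j\<in>UNIV. bcomp b j (c + t *\<^sub>R y, u t) * y $ j)) (at t)"
      using ud[of t] t by auto
  next
    fix t :: real assume "0 \<le> t \<and> t \<le> 1"
    then show "u t \<in> {m1..m2}" using ubar[of t] by auto
  qed
qed

lemma local_exist: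
  assumes K: "compact K" "K \<subseteq> U" and cK: "cball c \<rho> \<subseteq> K" and rho: "\<rho> > 0" and v: "v > 0"
  shows "\<exists>V. solves_pfaff b (ball c \<rho>) V \<and> V c = v"
proof -
  obtain A0 where A0: "\<forall>x\<in>K. \<forall>w>0. norm (b x w) \<le> A0 * f w" using bK[OF K] by blast
  obtain m1 m2 where m: "0 < m1" "m1 \<le> v" "v \<le> m2"
    and I: "integral {m1..v} (\<lambda>s. 1 / f s) > \<bar>A0\<bar> * \<rho> + 1" "integral {v..m2} (\<lambda>s. 1 / f s) > \<bar>A0\<bar> * \<rho> + 1"
    using barrier_levels[OF v] by blast
  define P where "P = (\<lambda>(y::real^'n) u. u 0 = v \<and> continuous_on {0..1} u \<and>
     (\<forall>t. 0 < t \<and> t \<le> 1 \<longrightarrow> (u has_real_derivative (\<Sum>j\<in>UNIV. bcomp b j (c + t *\<^sub>R y, u t) * y $ j)) (at t)) \<and>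
     (\<forall>t. 0 \<le> t \<and> t \<le> 1 \<longrightarrow> u t \<in> {m1..m2}))"
  have ex: "\<exists>u. P y u" if "y \<in> ball 0 \<rho>" for y
    unfolding P_def by (rule ray_ode[OF K cK rho A0 m I that])
  define \<phi> where "\<phi> = (\<lambda>t y. (SOME u. P y u) t)"
  have Pphi: "P y (\<lambda>t. \<phi> t y)" if "y \<in> ball 0 \<rho>" for y
    unfolding \<phi>_def using someI_ex[OF ex[OF that]] by simp
  interpret R: ray U b K c \<rho> m1 m2 v \<phi>
  proof (unfold_locales)
    show "compact K" "K \<subseteq> U" "cball c \<rho> \<subseteq> K" "0 < \<rho>" "0 < m1" "m1 \<le> m2" using K cK rho m by auto
  qed (use Pphi in \<open>auto simp: P_def\<close>)
  have "\<phi> 1 0 = v"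
  proof -
    have y0: "(0::real^'n) \<in> ball 0 \<rho>" using rho by simp
    have "\<phi> 1 0 = \<phi> 0 0"
    proof (rule DERIV_isconst_end[of 0 1 "\<lambda>t. \<phi> t 0"])
      show "continuous_on {0..1} (\<lambda>t. \<phi> t 0)" using Pphi[OF y0] unfolding P_def by blast
      fix t :: real assume "0 < t" "t < 1"
      then show "((\<lambda>t. \<phi> t 0) has_real_derivative 0) (at t)" using Pphi[OF y0] unfolding P_def by auto
    qed simp
    then show ?thesis using Pphi[OF y0] unfolding P_def by simp
  qed
  then show ?thesis using R.ray_solves by (intro exI[of _ "\<lambda>x. \<phi> 1 (x - c)"]) auto
qed

end

context pfaff begin

lemma solves_mono: "solves_pfaff b N V \<Longrightarrow> N' \<subseteq> N \<Longrightarrow> solves_pfaff b N' V"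
  unfolding solves_pfaff_def by (auto intro: continuous_on_subset)

lemma solves_has_derivative:
  assumes sol: "solves_pfaff b N V" and N: "open N" "N \<subseteq> U" and p: "p \<in> N"
  shows "(V has_derivative (\<lambda>h. h \<bullet> b p (V p))) (at p)"
proof -
  have Vc: "continuous_on N V" and Vp: "\<And>x. x \<in> N \<Longrightarrow> V x > 0"
    and Vd: "\<And>x i. x \<in> N \<Longrightarrow> ((\<lambda>t. V (x + t *\<^sub>R axis i 1)) has_real_derivative b x (V x) $ i) (at 0)"
    using sol unfolding solves_pfaff_def by auto
  have "(V has_derivative (\<lambda>h. \<Sum>u\<in>Basis. (h \<bullet> u) * (b p (V p) \<bullet> u))) (at p)"
  proof (rule partials_has_derivative[OF N(1) p])
    fix u z :: "real^'n" assume u: "u \<in> Basis" and z: "z \<in> N"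
    then obtain i where ui: "u = axis i 1" unfolding basis_vec_eq by auto
    show "((\<lambda>t. V (z + t *\<^sub>R u)) has_real_derivative b z (V z) \<bullet> u) (at 0)"
      using Vd[OF z, of i] unfolding ui by (simp add: inner_axis)
  next
    fix u :: "real^'n" assume u: "u \<in> Basis"
    then obtain i where ui: "u = axis i 1" unfolding basis_vec_eq by auto
    have "continuous_on N (\<lambda>z. bcomp b i (z, V z))"
      by (rule continuous_on_compose2[OF b_cont]) (use Vc Vp N in \<open>auto intro!: continuous_intros simp: Om_def\<close>)
    then show "continuous_on N (\<lambda>z. b z (V z) \<bullet> u)" unfolding ui by (simp add: inner_axis bcomp_eq)
  qed
  moreover have "(\<lambda>h. \<Sum>u\<in>Basis. (h \<bullet> u) * (b p (V p) \<bullet> u)) = (\<lambda>h. h \<bullet> b p (V p))"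
    by (rule ext) (simp add: euclidean_inner[symmetric])
  ultimately show ?thesis by simp
qed

lemma uniq:
  assumes s1: "solves_pfaff b N V1" and s2: "solves_pfaff b N V2"
    and N: "open N" "convex N" "N \<subseteq> U" and a: "a \<in> N" and x: "x \<in> N" and eq: "V1 a = V2 a"
  shows "V1 x = V2 x"
proof -
  define \<sigma> where "\<sigma> = (\<lambda>\<tau>::real. a + \<tau> *\<^sub>R (x - a))"
  have \<sigma>N: "\<sigma> \<tau> \<in> N" if "0 \<le> \<tau>" "\<tau> \<le> 1" for \<tau>
  proof -
    have "(1 - \<tau>) *\<^sub>R a + \<tau> *\<^sub>R x \<in> N" using N(2) a x that unfolding convex_alt by blast
    then show ?thesis unfolding \<sigma>_def by (simp add: algebra_simps)
  qed
  have \<sigma>c: "continuous_on S \<sigma>" for S unfolding \<sigma>_def by (intro continuous_intros)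
  have V1c: "continuous_on N V1" and V1p: "\<And>z. z \<in> N \<Longrightarrow> V1 z > 0" using s1 unfolding solves_pfaff_def by auto
  have V2c: "continuous_on N V2" and V2p: "\<And>z. z \<in> N \<Longrightarrow> V2 z > 0" using s2 unfolding solves_pfaff_def by auto
  have W1c: "continuous_on {0..1} (\<lambda>\<tau>. V1 (\<sigma> \<tau>))"
    by (rule continuous_on_compose2[OF V1c \<sigma>c]) (use \<sigma>N in auto)
  have W2c: "continuous_on {0..1} (\<lambda>\<tau>. V2 (\<sigma> \<tau>))"
    by (rule continuous_on_compose2[OF V2c \<sigma>c]) (use \<sigma>N in auto)
  define S where "S = (\<lambda>\<tau>. V1 (\<sigma> \<tau>)) ` {0..1} \<union> (\<lambda>\<tau>. V2 (\<sigma> \<tau>)) ` {0..1}"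
  have Sc: "compact S" unfolding S_def
    by (intro compact_Un compact_continuous_image W1c W2c compact_Icc)
  have Sne: "S \<noteq> {}" unfolding S_def by auto
  obtain m where m: "m \<in> S" "\<And>z. z \<in> S \<Longrightarrow> m \<le> z" using compact_attains_inf[OF Sc Sne] by blast
  obtain M0 where M0: "\<forall>z\<in>S. norm z \<le> M0"
    using compact_imp_bounded[OF Sc] unfolding bounded_iff by blast
  have M: "\<And>z. z \<in> S \<Longrightarrow> z \<le> M0" using M0 by force
  have m0: "m > 0" using m(1) V1p V2p \<sigma>N unfolding S_def by auto
  define Kx where "Kx = \<sigma> ` {0..1}"
  have Kxc: "compact Kx" unfolding Kx_def by (intro compact_continuous_image \<sigma>c compact_Icc)
  have KxU: "Kx \<subseteq> U" unfolding Kx_def using \<sigma>N N(3) by auto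
  obtain Lv where Lv: "Lv \<ge> 0" "\<And>x w w' j. x \<in> Kx \<Longrightarrow> w \<in> {m..M0} \<Longrightarrow> w' \<in> {m..M0} \<Longrightarrow>
      \<bar>b x w $ j - b x w' $ j\<bar> \<le> Lv * \<bar>w - w'\<bar>"
    using b_lip_v[OF Kxc KxU m0, of M0] by blast
  define NY where "NY = (\<Sum>j\<in>UNIV. \<bar>(x - a) $ j\<bar>)"
  have NY0: "NY \<ge> 0" unfolding NY_def by (auto intro: sum_nonneg)
  define L where "L = Lv * NY + 1"
  have L: "L > 0" unfolding L_def using Lv(1) NY0 by (simp add: add_nonneg_pos)
  define \<psi> where "\<psi> = (\<lambda>\<tau>. V1 (\<sigma> \<tau>) - V2 (\<sigma> \<tau>))"
  define \<psi>' where "\<psi>' = (\<lambda>\<tau>. (x - a) \<bullet> b (\<sigma> \<tau>) (V1 (\<sigma> \<tau>)) - (x - a) \<bullet> b (\<sigma> \<tau>) (V2 (\<sigma> \<tau>)))"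
  have "\<bar>\<psi> 1\<bar> \<le> 0 / L * exp (2 * L)"
  proof (rule gronwall[OF L, where \<psi>=\<psi> and \<psi>'=\<psi>' and t=1 and K=0])
    show "continuous_on {0..1} \<psi>" unfolding \<psi>_def by (intro continuous_intros W1c W2c)
    show "\<psi> 0 = 0" unfolding \<psi>_def \<sigma>_def using eq by simp
    show "(\<psi> has_real_derivative \<psi>' s) (at s)" if s: "0 < s" "s \<le> 1" for s
    proof -
      have sd: "(\<sigma> has_derivative (\<lambda>h. h *\<^sub>R (x - a))) (at s)" unfolding \<sigma>_def
        by (auto intro!: derivative_eq_intros)
      have sN: "\<sigma> s \<in> N" using \<sigma>N s by auto
      have d1: "((\<lambda>\<tau>. V1 (\<sigma> \<tau>)) has_derivative (\<lambda>h. (h *\<^sub>R (x - a)) \<bullet> b (\<sigma> s) (V1 (\<sigma> s)))) (at s)"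
        using diff_chain_at[OF sd solves_has_derivative[OF s1 N(1,3) sN]] by (simp add: o_def)
      have d2: "((\<lambda>\<tau>. V2 (\<sigma> \<tau>)) has_derivative (\<lambda>h. (h *\<^sub>R (x - a)) \<bullet> b (\<sigma> s) (V2 (\<sigma> s)))) (at s)"
        using diff_chain_at[OF sd solves_has_derivative[OF s2 N(1,3) sN]] by (simp add: o_def)
      have "(\<psi> has_derivative (\<lambda>h. (h *\<^sub>R (x - a)) \<bullet> b (\<sigma> s) (V1 (\<sigma> s)) - (h *\<^sub>R (x - a)) \<bullet> b (\<sigma> s) (V2 (\<sigma> s)))) (at s)"
        unfolding \<psi>_def by (rule has_derivative_diff[OF d1 d2])
      moreover have "(\<lambda>h. (h *\<^sub>R (x - a)) \<bullet> b (\<sigma> s) (V1 (\<sigma> s)) - (h *\<^sub>R (x - a)) \<bullet> b (\<sigma> s) (V2 (\<sigma> s)))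
          = (\<lambda>h. \<psi>' s * h)"
        by (rule ext) (simp only: \<psi>'_def inner_scaleR_left right_diff_distrib mult.commute)
      ultimately show ?thesis unfolding has_field_derivative_def by simp
    qed
    show "\<bar>\<psi>' s\<bar> \<le> L * \<bar>\<psi> s\<bar> + 0" if s: "0 < s" "s \<le> 1" for s
    proof -
      have sK: "\<sigma> s \<in> Kx" unfolding Kx_def using s by auto
      have w1: "V1 (\<sigma> s) \<in> {m..M0}" using m(2) M s unfolding S_def by auto
      have w2: "V2 (\<sigma> s) \<in> {m..M0}" using m(2) M s unfolding S_def by auto
      have "\<psi>' s = (\<Sum>j\<in>UNIV. (b (\<sigma> s) (V1 (\<sigma> s)) $ j - b (\<sigma> s) (V2 (\<sigma> s)) $ j) * (x - a) $ j)"
        unfolding \<psi>'_def by (simp add: inner_vec_def sum_subtractf[symmetric] algebra_simps)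
      also have "\<bar>\<dots>\<bar> \<le> (Lv * \<bar>\<psi> s\<bar>) * NY" unfolding NY_def
        by (rule sum_bound_mult) (use Lv(2)[OF sK w1 w2] in \<open>simp add: \<psi>_def\<close>)
      finally show ?thesis unfolding L_def by (simp add: algebra_simps)
    qed
  qed auto
  then show ?thesis unfolding \<psi>_def \<sigma>_def by simp
qed

end

lemma floor_bracket:
  fixes Nn :: nat and s :: real
  assumes Nn: "Nn > 0" and s: "0 \<le> s" "s \<le> 1"
  defines "kk \<equiv> min (nat \<lfloor>s * real Nn\<rfloor>) (Nn - 1)"
  shows "kk < Nn" "real kk / real Nn \<le> s" "s \<le> real (kk + 1) / real Nn"
proof -
  show "kk < Nn" unfolding kk_def using Nn by auto
  have f1: "real_of_int \<lfloor>s * real Nn\<rfloor> \<le> s * real Nn" by (rule of_int_floor_le)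
  have f2: "s * real Nn < real_of_int \<lfloor>s * real Nn\<rfloor> + 1" by (rule real_of_int_floor_add_one_gt)
  have f0: "\<lfloor>s * real Nn\<rfloor> \<ge> 0" using s by simp
  have fle: "\<lfloor>s * real Nn\<rfloor> \<le> int Nn"
  proof -
    have "s * real Nn \<le> 1 * real Nn" using s by (intro mult_right_mono) auto
    then show ?thesis by (simp add: floor_le_iff)
  qed
  have NnR: "real Nn > 0" using Nn by simp
  show "real kk / real Nn \<le> s"
  proof -
    have "real kk \<le> real (nat \<lfloor>s * real Nn\<rfloor>)" unfolding kk_def by simp
    also have "\<dots> = real_of_int \<lfloor>s * real Nn\<rfloor>" using f0 by simp
    also have "\<dots> \<le> s * real Nn" by (rule f1)
    finally show ?thesis using NnR by (simp add: divide_le_eq)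
  qed
  show "s \<le> real (kk + 1) / real Nn"
  proof (cases "nat \<lfloor>s * real Nn\<rfloor> \<le> Nn - 1")
    case True
    then have "kk = nat \<lfloor>s * real Nn\<rfloor>" unfolding kk_def by simp
    then have "real (kk + 1) = real_of_int \<lfloor>s * real Nn\<rfloor> + 1" using f0 by simp
    then have "s * real Nn \<le> real (kk + 1)" using f2 by linarith
    then show ?thesis using NnR by (simp add: le_divide_eq)
  next
    case False
    then have "kk = Nn - 1" unfolding kk_def by simp
    then have "real (kk + 1) = real Nn" using Nn by simp
    then show ?thesis using s NnR by simp
  qed
qed

context pfaff_f begin

lemma path_continues:
  assumes pa: "path \<gamma>" and pi: "path_image \<gamma> \<subseteq> U" and ps: "pathstart \<gamma> = 0" and w: "w > 0"
  shows "continues_along b U w \<gamma>"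
proof -
  define K0 where "K0 = path_image \<gamma>"
  have K0c: "compact K0" unfolding K0_def using pa by blast
  obtain e where e: "e > 0" "\<And>x. x \<in> K0 \<Longrightarrow> ball x e \<subseteq> U"
    using Heine_Borel_lemma[OF K0c, of "{U}"] pi U_open unfolding K0_def by auto
  define \<rho> where "\<rho> = e / 2"
  have rho: "\<rho> > 0" unfolding \<rho>_def using e by simp
  define K where "K = {x + y | x y. x \<in> K0 \<and> y \<in> cball 0 \<rho>}"
  have Kc: "compact K" unfolding K_def by (intro compact_sums K0c compact_cball)
  have KU: "K \<subseteq> U"
  proof
    fix z assume "z \<in> K"
    then obtain x y where "z = x + y" "x \<in> K0" "norm y \<le> \<rho>" unfolding K_def by auto
    then show "z \<in> U" using e(2)[of x] rho unfolding \<rho>_def by (auto simp: dist_norm)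
  qed
  have cK: "cball c \<rho> \<subseteq> K" if "c \<in> K0" for c
  proof
    fix z assume "z \<in> cball c \<rho>"
    then have "z = c + (z - c)" "norm (z - c) \<le> \<rho>" by (auto simp: dist_norm norm_minus_commute)
    then show "z \<in> K" unfolding K_def using that by force
  qed
  have ballU: "ball c \<rho> \<subseteq> U" if "c \<in> K0" for c using cK[OF that] KU ball_subset_cball by blast
  define sol where "sol = (\<lambda>c v. SOME V. solves_pfaff b (ball c \<rho>) V \<and> V c = v)"
  have solP: "solves_pfaff b (ball c \<rho>) (sol c v) \<and> sol c v c = v" if "c \<in> K0" "v > 0" for c v
    unfolding sol_def by (rule someI_ex[OF local_exist[OF Kc KU cK[OF that(1)] rho that(2)]])
  have gc: "continuous_on {0..1} \<gamma>" using pa unfolding path_def .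
  have "uniformly_continuous_on {0..1} \<gamma>" by (rule compact_uniformly_continuous[OF gc compact_Icc])
  then obtain \<delta> where \<delta>: "\<delta> > 0" "\<And>s t. s \<in> {0..1} \<Longrightarrow> t \<in> {0..1} \<Longrightarrow> dist s t < \<delta> \<Longrightarrow> dist (\<gamma> s) (\<gamma> t) < \<rho> / 2"
    unfolding uniformly_continuous_on_def using rho by (metis half_gt_zero)
  obtain n where n: "inverse (real (Suc n)) < \<delta> / 2" using reals_Archimedean[of "\<delta> / 2"] \<delta> by auto
  define Nn where "Nn = Suc n"
  have Nn: "Nn > 0" "real Nn > 0" unfolding Nn_def by auto
  have Nd: "1 / real Nn < \<delta> / 2" using n unfolding Nn_def by (simp add: inverse_eq_divide)
  have Nd1: "1 / real Nn < \<delta>" using Nd \<delta>(1) by linarith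
  define \<tau> where "\<tau> = (\<lambda>k::nat. real k / real Nn)"
  have \<tau>01: "\<tau> k \<in> {0..1}" if "k \<le> Nn" for k unfolding \<tau>_def using that Nn by auto
  have \<tau>S: "\<tau> (Suc k) = \<tau> k + 1 / real Nn" for k unfolding \<tau>_def by (simp add: add_divide_distrib)
  have \<tau>lt: "\<tau> a < \<tau> b \<longleftrightarrow> a < b" for a b unfolding \<tau>_def using Nn by (simp add: divide_less_cancel)
  have \<tau>le: "\<tau> a \<le> \<tau> b \<longleftrightarrow> a \<le> b" for a b unfolding \<tau>_def using Nn by (simp add: divide_le_cancel)
  have gK0: "\<gamma> t \<in> K0" if "t \<in> {0..1}" for t unfolding K0_def path_image_def using that by auto
  have close: "dist (\<gamma> s) (\<gamma> t) < \<rho> / 2" if "s \<in> {0..1}" "t \<in> {0..1}" "\<bar>s - t\<bar> < \<delta>" for s t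
    using \<delta>(2)[OF that(1,2)] that(3) by (simp add: dist_real_def)
  define wv where "wv = rec_nat w (\<lambda>k wk. sol (\<gamma> (\<tau> k)) wk (\<gamma> (\<tau> (Suc k))))"
  have wv0: "wv 0 = w" unfolding wv_def by simp
  have wvS: "wv (Suc k) = sol (\<gamma> (\<tau> k)) (wv k) (\<gamma> (\<tau> (Suc k)))" for k unfolding wv_def by simp
  define V where "V = (\<lambda>k. sol (\<gamma> (\<tau> k)) (wv k))"
  have next_close: "dist (\<gamma> (\<tau> k)) (\<gamma> (\<tau> (Suc k))) < \<rho> / 2" if "Suc k \<le> Nn" for k
  proof -
    have "\<bar>\<tau> k - \<tau> (Suc k)\<bar> < \<delta>" using \<tau>S[of k] Nd1 Nn by simp
    then show ?thesis using close[OF \<tau>01 \<tau>01, of k "Suc k"] that by simp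
  qed
  have inv: "wv k > 0 \<and> solves_pfaff b (ball (\<gamma> (\<tau> k)) \<rho>) (V k) \<and> V k (\<gamma> (\<tau> k)) = wv k" if "k < Nn" for k
    using that
  proof (induction k)
    case 0
    then show ?case unfolding V_def using solP[OF gK0[OF \<tau>01] w, of 0] wv0 w by auto
  next
    case (Suc k)
    then have IH: "wv k > 0" "solves_pfaff b (ball (\<gamma> (\<tau> k)) \<rho>) (V k)" by auto
    have "\<gamma> (\<tau> (Suc k)) \<in> ball (\<gamma> (\<tau> k)) \<rho>" using next_close[of k] Suc.prems rho by auto
    then have pos: "wv (Suc k) > 0" using IH(2) unfolding wvS V_def solves_pfaff_def by auto
    show ?case using solP[OF gK0[OF \<tau>01] pos, of "Suc k"] pos Suc.prems unfolding V_def by auto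
  qed
  have agree: "V k z = V (Suc k) z" if "Suc k < Nn" "z \<in> ball (\<gamma> (\<tau> (Suc k))) (\<rho> / 2)" for k z
  proof (rule uniq)
    have sub1: "ball (\<gamma> (\<tau> (Suc k))) (\<rho> / 2) \<subseteq> ball (\<gamma> (\<tau> k)) \<rho>"
    proof
      fix x assume "x \<in> ball (\<gamma> (\<tau> (Suc k))) (\<rho> / 2)"
      then have "dist x (\<gamma> (\<tau> (Suc k))) < \<rho> / 2" by (simp add: dist_commute)
      moreover have "dist (\<gamma> (\<tau> k)) (\<gamma> (\<tau> (Suc k))) < \<rho> / 2" using next_close[of k] that(1) by simp
      moreover have "dist x (\<gamma> (\<tau> k)) \<le> dist x (\<gamma> (\<tau> (Suc k))) + dist (\<gamma> (\<tau> k)) (\<gamma> (\<tau> (Suc k)))"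
        by (rule dist_triangle2)
      ultimately show "x \<in> ball (\<gamma> (\<tau> k)) \<rho>" by (simp add: dist_commute)
    qed
    show "solves_pfaff b (ball (\<gamma> (\<tau> (Suc k))) (\<rho> / 2)) (V k)"
      by (rule solves_mono[OF _ sub1]) (use inv[of k] that in auto)
    show "solves_pfaff b (ball (\<gamma> (\<tau> (Suc k))) (\<rho> / 2)) (V (Suc k))"
      by (rule solves_mono[OF _ ball_subset_ball_iff[THEN iffD2]]) (use inv[of "Suc k"] that rho in auto)
    show "open (ball (\<gamma> (\<tau> (Suc k))) (\<rho> / 2))" "convex (ball (\<gamma> (\<tau> (Suc k))) (\<rho> / 2))" by auto
    show "ball (\<gamma> (\<tau> (Suc k))) (\<rho> / 2) \<subseteq> U"
      using ballU[OF gK0[OF \<tau>01[of "Suc k"]]] that(1) rho by auto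
    show "\<gamma> (\<tau> (Suc k)) \<in> ball (\<gamma> (\<tau> (Suc k))) (\<rho> / 2)" using rho by simp
    show "z \<in> ball (\<gamma> (\<tau> (Suc k))) (\<rho> / 2)" by fact
    show "V k (\<gamma> (\<tau> (Suc k))) = V (Suc k) (\<gamma> (\<tau> (Suc k)))"
      using inv[of "Suc k"] that(1) unfolding wvS V_def by simp
  qed
  define kk where "kk = (\<lambda>s::real. min (nat \<lfloor>s * real Nn\<rfloor>) (Nn - 1))"
  have br: "kk s < Nn" "\<tau> (kk s) \<le> s" "s \<le> \<tau> (Suc (kk s))" if "0 \<le> s" "s \<le> 1" for s
    using floor_bracket[OF Nn(1) that] unfolding kk_def \<tau>_def by auto
  define W where "W = (\<lambda>s. V (kk s) (\<gamma> s))"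
  show ?thesis unfolding continues_along_def
  proof (intro exI[of _ W] conjI ballI)
    have "kk 0 = 0" unfolding kk_def by simp
    moreover have "\<tau> 0 = 0" unfolding \<tau>_def by simp
    ultimately show "W 0 = w" unfolding W_def using inv[of 0] Nn wv0 by auto
  next
    fix t :: real assume t: "t \<in> {0..1}"
    define k where "k = kk t"
    have k: "k < Nn" "\<tau> k \<le> t" "t \<le> \<tau> (Suc k)" using br t unfolding k_def by auto
    have tk: "\<bar>t - \<tau> k\<bar> \<le> 1 / real Nn" using k \<tau>S by auto
    show "\<exists>N Vf. open N \<and> \<gamma> t \<in> N \<and> N \<subseteq> U \<and> solves_pfaff b N Vf \<and>
       (\<exists>e>0. \<forall>s\<in>{0..1}. \<bar>s - t\<bar> < e \<longrightarrow> \<gamma> s \<in> N \<and> Vf (\<gamma> s) = W s)"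
    proof (intro exI[of _ "ball (\<gamma> (\<tau> k)) \<rho>"] exI[of _ "V k"] conjI)
      show "open (ball (\<gamma> (\<tau> k)) \<rho>)" by simp
      have kN: "k \<le> Nn" using k by simp
      have ins: "\<gamma> s \<in> ball (\<gamma> (\<tau> k)) \<rho>" if "s \<in> {0..1}" "\<bar>s - \<tau> k\<bar> < \<delta>" for s
        using close[OF that(1) \<tau>01[OF kN] that(2)] rho by (simp add: dist_commute)
      show "\<gamma> t \<in> ball (\<gamma> (\<tau> k)) \<rho>" using ins[OF t] tk Nd by auto
      show "ball (\<gamma> (\<tau> k)) \<rho> \<subseteq> U" using ballU[OF gK0[OF \<tau>01[OF kN]]] .
      show "solves_pfaff b (ball (\<gamma> (\<tau> k)) \<rho>) (V k)" using inv[OF k(1)] by simp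
      show "\<exists>e>0. \<forall>s\<in>{0..1}. \<bar>s - t\<bar> < e \<longrightarrow> \<gamma> s \<in> ball (\<gamma> (\<tau> k)) \<rho> \<and> V k (\<gamma> s) = W s"
      proof (intro exI[of _ "1 / real Nn"] conjI ballI impI)
        show "1 / real Nn > 0" using Nn by simp
        fix s assume s: "s \<in> {0..1}" and st: "\<bar>s - t\<bar> < 1 / real Nn"
        have sk: "\<bar>s - \<tau> k\<bar> < \<delta>" using st tk Nd by linarith
        show "\<gamma> s \<in> ball (\<gamma> (\<tau> k)) \<rho>" by (rule ins[OF s sk])
        define k' where "k' = kk s"
        have k': "k' < Nn" "\<tau> k' \<le> s" "s \<le> \<tau> (Suc k')" using br s unfolding k'_def by auto
        have "\<tau> k' < \<tau> (Suc (Suc k))" using k'(2) st k(3) \<tau>S[of "Suc k"] by linarith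
        then have a1: "k' \<le> Suc k" using \<tau>lt by simp
        have "\<tau> k < \<tau> (Suc (Suc k'))" using k(2) st k'(3) \<tau>S[of "Suc k'"] by linarith
        then have a2: "k \<le> Suc k'" using \<tau>lt by simp
        have "V k (\<gamma> s) = V k' (\<gamma> s)"
        proof (cases "k' = k")
          case True then show ?thesis by simp
        next
          case False
          then consider "k' = Suc k" | "k = Suc k'" using a1 a2 by linarith
          then show ?thesis
          proof cases
            case 1
            have "\<tau> (Suc k) \<le> s" using k'(2) 1 by simp
            then have "\<bar>s - \<tau> (Suc k)\<bar> < \<delta>" using st k(3) Nd by linarith
            then have "\<gamma> s \<in> ball (\<gamma> (\<tau> (Suc k))) (\<rho> / 2)"
              using close[OF s \<tau>01[of "Suc k"]] k'(1) 1 by (simp add: dist_commute)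
            then show ?thesis using agree[of k "\<gamma> s"] k'(1) 1 by simp
          next
            case 2
            have "s \<le> \<tau> k" using k'(3) 2 by simp
            then have "\<bar>s - \<tau> k\<bar> < \<delta>" using st k(2) Nd by linarith
            then have "\<gamma> s \<in> ball (\<gamma> (\<tau> (Suc k'))) (\<rho> / 2)"
              using close[OF s \<tau>01[OF kN]] 2 by (simp add: dist_commute)
            then show ?thesis using agree[of k' "\<gamma> s"] k(1) 2 by simp
          qed
        qed
        then show "V k (\<gamma> s) = W s" unfolding W_def k'_def by simp
      qed
    qed
  qed
qed

end

lemma quad_bound:
  fixes G :: "real^'n^'n"
  shows "c \<bullet> (G *v c) \<le> (\<Sum>i\<in>UNIV. \<Sum>j\<in>UNIV. \<bar>G $ i $ j\<bar>) * (c \<bullet> c)"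
proof -
  have "c \<bullet> (G *v c) = (\<Sum>i\<in>UNIV. \<Sum>j\<in>UNIV. c $ i * G $ i $ j * c $ j)"
    by (simp add: inner_vec_def matrix_vector_mult_def sum_distrib_left mult.assoc)
  also have "\<dots> \<le> (\<Sum>i\<in>UNIV. \<Sum>j\<in>UNIV. \<bar>G $ i $ j\<bar> * (c \<bullet> c))"
  proof (intro sum_mono)
    fix i j
    have ci: "\<bar>c $ i\<bar> \<le> norm c" "\<bar>c $ j\<bar> \<le> norm c" by (simp_all add: component_le_norm_cart)
    have "\<bar>c $ i\<bar> * \<bar>c $ j\<bar> \<le> norm c * norm c" using ci by (intro mult_mono) auto
    also have "\<dots> = c \<bullet> c" by (simp add: power2_norm_eq_inner[symmetric] power2_eq_square)
    finally have cc: "\<bar>c $ i\<bar> * \<bar>c $ j\<bar> \<le> c \<bullet> c" .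
    have "c $ i * G $ i $ j * c $ j \<le> \<bar>c $ i * G $ i $ j * c $ j\<bar>" by simp
    also have "\<dots> = \<bar>G $ i $ j\<bar> * (\<bar>c $ i\<bar> * \<bar>c $ j\<bar>)" by (simp add: abs_mult)
    also have "\<dots> \<le> \<bar>G $ i $ j\<bar> * (c \<bullet> c)" using cc by (intro mult_left_mono) auto
    finally show "c $ i * G $ i $ j * c $ j \<le> \<bar>G $ i $ j\<bar> * (c \<bullet> c)" .
  qed
  also have "\<dots> = (\<Sum>i\<in>UNIV. \<Sum>j\<in>UNIV. \<bar>G $ i $ j\<bar>) * (c \<bullet> c)" by (simp add: sum_distrib_right)
  finally show ?thesis .
qed

theorem lemma4p1:
  fixes U :: "(real^'n) set"
    and g :: "real^'n \<Rightarrow> real^'n^'n"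
    and b :: "real^'n \<Rightarrow> real \<Rightarrow> real^'n"
    and f :: "real \<Rightarrow> real"
    and v0 w :: real
  assumes U_open: "open U" and U0: "0 \<in> U"
    and g_smooth: "\<And>i j. smooth_on U (\<lambda>x. g x $ i $ j)"
    and g_sym: "\<And>x. x \<in> U \<Longrightarrow> transpose (g x) = g x"
    and g_posdef: "\<And>x c. x \<in> U \<Longrightarrow> c \<noteq> 0 \<Longrightarrow> c \<bullet> (g x *v c) > 0"
    and b_smooth: "\<And>i. smooth_on (U \<times> {0<..}) (bcomp b i)"
    and b_compat: "\<And>i j x v. x \<in> U \<Longrightarrow> v > 0 \<Longrightarrow>
        pd_x j (bcomp b i) x v + (b x v $ j) * pd_v (bcomp b i) x v
      = pd_x i (bcomp b j) x v + (b x v $ i) * pd_v (bcomp b j) x v"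
    and f_pos: "\<And>v. v > 0 \<Longrightarrow> f v > 0"
    and f_int: "\<And>a c. 0 < a \<Longrightarrow> a \<le> c \<Longrightarrow> (\<lambda>s. 1 / f s) integrable_on {a..c}"
    and v0_pos: "v0 > 0"
    and F_top: "filterlim (Fint f v0) at_top at_top"
    and F_bot: "filterlim (Fint f v0) at_bot (at_right 0)"
    and b_fnorm: "\<exists>C. \<forall>x\<in>U. \<forall>v>0. gnorm (g x) (b x v) \<le> C * f v"
    and w_pos: "w > 0"
  shows "\<forall>\<gamma>. path \<gamma> \<and> path_image \<gamma> \<subseteq> U \<and> pathstart \<gamma> = 0 \<longrightarrow> continues_along b U w \<gamma>"
proof -
  have bK: "\<exists>A. \<forall>x\<in>K. \<forall>w>0. norm (b x w) \<le> A * f w" if K: "compact K" "K \<subseteq> U" for K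
  proof -
    obtain C where C: "\<forall>x\<in>U. \<forall>v>0. gnorm (g x) (b x v) \<le> C * f v" using b_fnorm by blast
    have gc: "continuous_on U (\<lambda>x. g x $ i $ j)" for i j
      using g_smooth[of i j] unfolding smooth_on_def by (metis empty_subsetI empty_set iter_pd.simps(1))
    have "continuous_on K (\<lambda>x. \<Sum>i\<in>UNIV. \<Sum>j\<in>UNIV. \<bar>g x $ i $ j\<bar>)"
      by (intro continuous_intros continuous_on_subset[OF gc K(2)])
    then obtain M0 where M0: "\<forall>x\<in>K. \<bar>\<Sum>i\<in>UNIV. \<Sum>j\<in>UNIV. \<bar>g x $ i $ j\<bar>\<bar> \<le> M0"
      using compact_bound_fun[OF K(1)] by blast
    define M where "M = max M0 0"
    have M: "M \<ge> 0" "\<And>x c. x \<in> K \<Longrightarrow> c \<bullet> (g x *v c) \<le> M * (c \<bullet> c)"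
    proof -
      show "M \<ge> 0" unfolding M_def by simp
      fix x c assume x: "x \<in> K"
      have "c \<bullet> (g x *v c) \<le> (\<Sum>i\<in>UNIV. \<Sum>j\<in>UNIV. \<bar>g x $ i $ j\<bar>) * (c \<bullet> c)" by (rule quad_bound)
      also have "\<dots> \<le> M * (c \<bullet> c)" using M0 x unfolding M_def
        by (intro mult_right_mono) (auto simp: le_max_iff_disj)
      finally show "c \<bullet> (g x *v c) \<le> M * (c \<bullet> c)" .
    qed
    show ?thesis
    proof (intro exI[of _ "sqrt M * C"] ballI allI impI)
      fix x and w :: real assume x: "x \<in> K" and w: "w > 0"
      have xU: "x \<in> U" using x K by auto
      have cc: "b x w \<bullet> b x w \<le> M * (gnorm (g x) (b x w))^2"
        by (rule gnorm_bound[OF g_sym[OF xU] g_posdef[OF xU] M(2)[OF x]]) 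
      have gn0: "gnorm (g x) (b x w) \<ge> 0" by (rule gnorm_nonneg[OF g_posdef[OF xU]])
      have "norm (b x w) = sqrt (b x w \<bullet> b x w)" by (simp add: norm_eq_sqrt_inner)
      also have "\<dots> \<le> sqrt (M * (gnorm (g x) (b x w))^2)" using cc by simp
      also have "\<dots> = sqrt M * gnorm (g x) (b x w)" using gn0 by (simp add: real_sqrt_mult)
      also have "\<dots> \<le> sqrt M * (C * f w)" using C xU w M(1) by (intro mult_left_mono) auto
      finally show "norm (b x w) \<le> sqrt M * C * f w" by (simp add: mult.assoc)
    qed
  qed
  interpret P: pfaff_f U b f v0
    by unfold_locales (use U_open b_smooth b_compat f_pos f_int v0_pos F_top F_bot bK in auto)
  show ?thesis using P.path_continues w_pos by blast
qed

end
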